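(* Let $\Gamma$ be a finite abelian group of order $n$ with identity $e$, and let $R,S,T \subseteq \Gamma$ with $R = R^{-1}$, $S = S^{-1}$ and $e \notin R \cup S$. Let $G = SC(\Gamma;R,S,T)$ be the semi-Cayley graph defined in the context. Then $\frac{\lambda_3(G)}{2n} \le \frac13$.
   Context: The semi-Cayley graph $SC(\Gamma;R,S,T)$ has vertex set $\Gamma \times \{0,1\}$, and $(h,i) \sim (g,j)$ if and only if one of the following holds: $i=j=0$ and $gh^{-1} \in R$; $i=j=1$ and $gh^{-1}\in S$; $i=0$, $j=1$ and $gh^{-1} \in T$ (the graph is undirected). $\lambda_3$ denotes the third largest eigenvalue (with multiplicity) of the adjacency matrix. *)

theory Defs
  imports "HOL-Analysis.Analysis" "HOL-Computational_Algebra.Polynomial"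
begin

text \<open>Semi-Cayley graph SC(Gamma;R,S,T) on Gamma x {0,1}; the Boolean component
  encodes 0 as False and 1 as True. The group Gamma is abelian, written additively,
  so g h^{-1} becomes g - h and the identity e becomes 0.\<close>

definition semi_cayley_adj ::
  "'g::ab_group_add set \<Rightarrow> 'g set \<Rightarrow> 'g set \<Rightarrow> ('g \<times> bool) \<Rightarrow> ('g \<times> bool) \<Rightarrow> bool" where
  "semi_cayley_adj R S T u v =
     (let (h, i) = u; (g, j) = v in
        (\<not> i \<and> \<not> j \<and> g - h \<in> R) \<or>
        (i \<and> j \<and> g - h \<in> S) \<or>
        (\<not> i \<and> j \<and> g - h \<in> T) \<or>
        (i \<and> \<not> j \<and> h - g \<in> T))"

definition semi_cayley_adj_matrix ::
  "'g::{ab_group_add,finite} set \<Rightarrow> 'g set \<Rightarrow> 'g set \<Rightarrow> real ^ ('g \<times> bool) ^ ('g \<times> bool)" where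
  "semi_cayley_adj_matrix R S T =
     (\<chi> u v. if semi_cayley_adj R S T u v then 1 else 0)"

definition char_poly_mat :: "real ^ 'n ^ 'n \<Rightarrow> real poly" where
  "char_poly_mat A = det (\<chi> i j. (if i = j then [:0, 1:] else 0) - [:A $ i $ j:])"

definition eigenvalues_mset :: "real ^ 'n ^ 'n \<Rightarrow> real multiset" where
  "eigenvalues_mset A = proots (char_poly_mat A)"

definition kth_largest_eigenvalue :: "nat \<Rightarrow> real ^ 'n ^ 'n \<Rightarrow> real" where
  "kth_largest_eigenvalue k A = rev (sorted_list_of_multiset (eigenvalues_mset A)) ! (k - 1)"

end

theory Submission
  imports Defs
begin

primrec nm :: "nat \<Rightarrow> 'g::ab_group_add \<Rightarrow> 'g" where
  "nm 0 g = 0" | "nm (Suc k) g = g + nm k g"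

lemma nm_add: "nm (a + b) g = nm a g + nm b g"
  by (induction a) (simp_all add: add.assoc)

lemma nm_one[simp]: "nm 1 g = g" by simp

definition subgrp :: "'g::ab_group_add set \<Rightarrow> bool" where
  "subgrp H \<longleftrightarrow> 0 \<in> H \<and> (\<forall>x\<in>H. \<forall>y\<in>H. x + y \<in> H) \<and> (\<forall>x\<in>H. -x \<in> H)"

lemma subgrp_add: "subgrp H \<Longrightarrow> x \<in> H \<Longrightarrow> y \<in> H \<Longrightarrow> x + y \<in> H"
  unfolding subgrp_def by blast
lemma subgrp_neg: "subgrp H \<Longrightarrow> x \<in> H \<Longrightarrow> -x \<in> H"
  unfolding subgrp_def by blast
lemma subgrp_zero: "subgrp H \<Longrightarrow> 0 \<in> H"
  unfolding subgrp_def by blast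
lemma subgrp_diff: "subgrp H \<Longrightarrow> x \<in> H \<Longrightarrow> y \<in> H \<Longrightarrow> x - y \<in> H"
  unfolding subgrp_def by (metis diff_conv_add_uminus)

lemma nm_in: "subgrp H \<Longrightarrow> g \<in> H \<Longrightarrow> nm k g \<in> H"
  by (induction k) (auto simp: subgrp_def)

lemma sum_const_nm: "finite A \<Longrightarrow> sum (\<lambda>_. g) A = nm (card A) g"
  by (induction A rule: finite_induct) auto

lemma nm_card: "nm CARD('g::{ab_group_add,finite}) (x::'g) = 0"
proof -
  have "(\<Sum>y\<in>UNIV. x + y) = (\<Sum>y\<in>UNIV. (y::'g))"
    by (rule sum.reindex_bij_witness[of _ "\<lambda>y. y - x" "\<lambda>y. x + y"]) auto
  moreover have "(\<Sum>y\<in>UNIV. x + y) = nm CARD('g) x + (\<Sum>y\<in>UNIV. y)"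
    by (simp add: sum.distrib sum_const_nm)
  ultimately show ?thesis by simp
qed

definition char_on :: "'g::ab_group_add set \<Rightarrow> ('g \<Rightarrow> complex) \<Rightarrow> bool" where
  "char_on H f \<longleftrightarrow> f 0 = 1 \<and> (\<forall>x\<in>H. \<forall>y\<in>H. f (x + y) = f x * f y)"

lemma char_on_nm: "subgrp H \<Longrightarrow> char_on H f \<Longrightarrow> g \<in> H \<Longrightarrow> f (nm k g) = f g ^ k"
  by (induction k) (auto simp: char_on_def nm_in)

lemma nth_root_exists: "0 < (k::nat) \<Longrightarrow> \<exists>z::complex. z ^ k = c"
proof (cases "c = 0")
  case True
  assume "0 < k" then show ?thesis using True by (intro exI[of _ 0]) simp
next
  case False
  assume k: "0 < k"
  from bij_betw_nth_root_unity[OF False k] have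
    "(\<lambda>z. (root k (norm c) * cis (Arg c / k)) * z) ` {z. z ^ k = 1} = {z. z ^ k = c}"
    by (simp add: bij_betw_def)
  moreover have "(1::complex) \<in> {z. z ^ k = 1}" by simp
  ultimately show ?thesis by blast
qed

lemma char_extend:
  fixes H :: "'g::ab_group_add set"
  assumes H: "subgrp H" and f: "char_on H f" and g: "g \<notin> H"
    and k0: "0 < k" and kH: "nm k g \<in> H" and kmin: "\<And>j. 0 < j \<Longrightarrow> j < k \<Longrightarrow> nm j g \<notin> H"
    and om: "\<omega> ^ k = f (nm k g)"
  defines "H' \<equiv> {x. \<exists>j<k. x - nm j g \<in> H}"
  shows "\<exists>f'. char_on H' f' \<and> (\<forall>x\<in>H. f' x = f x) \<and> f' g = \<omega> \<and> subgrp H' \<and> H \<subseteq> H' \<and> g \<in> H'"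
proof -
  have uniq: "i = j" if "i < k" "j < k" "x - nm i g \<in> H" "x - nm j g \<in> H" for x i j
  proof (rule ccontr)
    assume ne: "i \<noteq> j"
    have *: "nm j g - nm i g \<in> H" if "i < j" "x - nm i g \<in> H" "x - nm j g \<in> H" for i j
    proof -
      have "(x - nm i g) - (x - nm j g) \<in> H" using subgrp_diff[OF H that(2,3)] .
      then show ?thesis by simp
    qed
    show False
    proof (cases "i < j")
      case True
      have "nm j g = nm (j - i) g + nm i g" using nm_add[of "j - i" i g] True by simp
      then have "nm (j - i) g \<in> H" using *[OF True that(3,4)] by simp
      then show False using kmin[of "j - i"] True that by simp
    next
      case False
      then have lt: "j < i" using ne by simp
      have "nm i g = nm (i - j) g + nm j g" using nm_add[of "i - j" j g] lt by simp
      then have "nm (i - j) g \<in> H" using *[OF lt that(4,3)] by simp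
      then show False using kmin[of "i - j"] lt that by simp
    qed
  qed
  have k1: "1 < k"
  proof (rule ccontr)
    assume "\<not> 1 < k" then have "k = 1" using k0 by simp
    then show False using kH g by simp
  qed
  define J where "J x = (THE j. j < k \<and> x - nm j g \<in> H)" for x
  define f' where "f' x = f (x - nm (J x) g) * \<omega> ^ (J x)" for x
  have J: "J x = j" if "j < k" "x - nm j g \<in> H" for x j
    unfolding J_def using that uniq by (intro the_equality) auto
  have f'r: "f' x = f (x - nm j g) * \<omega> ^ j" if "j < k" "x - nm j g \<in> H" for x j
    using J[OF that] by (simp add: f'_def)
  have fadd: "f (x + y) = f x * f y" if "x \<in> H" "y \<in> H" for x y
    using f that by (simp add: char_on_def)
  have f0: "f 0 = 1" using f by (simp add: char_on_def)
  have addH': "x + y \<in> H' \<and> f' (x + y) = f' x * f' y" if xH: "x \<in> H'" and yH: "y \<in> H'" for x y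
  proof -
    obtain i where i: "i < k" "x - nm i g \<in> H" using xH unfolding H'_def by blast
    obtain j where j: "j < k" "y - nm j g \<in> H" using yH unfolding H'_def by blast
    have fx: "f' x = f (x - nm i g) * \<omega> ^ i" by (rule f'r[OF i])
    have fy: "f' y = f (y - nm j g) * \<omega> ^ j" by (rule f'r[OF j])
    have hsum: "(x - nm i g) + (y - nm j g) \<in> H" by (rule subgrp_add[OF H i(2) j(2)])
    show ?thesis
    proof (cases "i + j < k")
      case True
      have e: "x + y - nm (i + j) g = (x - nm i g) + (y - nm j g)" by (simp add: nm_add algebra_simps)
      have "f' (x + y) = f ((x - nm i g) + (y - nm j g)) * \<omega> ^ (i + j)"
        using f'r[of "i + j" "x + y"] True hsum e by simp
      also have "\<dots> = f' x * f' y" using fx fy fadd[OF i(2) j(2)] by (simp add: power_add)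
      moreover have "x + y - nm (i + j) g \<in> H" using hsum by (simp only: e)
      then have "x + y \<in> H'" unfolding H'_def using True by blast
      ultimately show ?thesis by simp
    next
      case False
      define l where "l = i + j - k"
      have l: "l < k" "i + j = k + l" using False i j by (auto simp: l_def)
      have e: "x + y - nm l g = ((x - nm i g) + (y - nm j g)) + nm k g"
        using l(2) nm_add[of i j g] nm_add[of k l g] by (simp add: algebra_simps)
      have inH: "x + y - nm l g \<in> H" using subgrp_add[OF H hsum kH] by (simp only: e)
      have "f' (x + y) = f (((x - nm i g) + (y - nm j g)) + nm k g) * \<omega> ^ l"
        using f'r[OF l(1) inH] by (simp only: e)
      also have "\<dots> = f (x - nm i g) * f (y - nm j g) * \<omega> ^ k * \<omega> ^ l"
        using fadd[OF hsum kH] fadd[OF i(2) j(2)] om by simp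
      also have "\<dots> = f' x * f' y"
      proof -
        have "\<omega> ^ k * \<omega> ^ l = \<omega> ^ i * \<omega> ^ j" using l(2) by (simp add: power_add[symmetric])
        then show ?thesis using fx fy by (simp add: mult_ac)
      qed
      finally show ?thesis using l inH by (auto simp: H'_def)
    qed
  qed
  have HH': "H \<subseteq> H'" using k0 by (auto simp: H'_def intro!: exI[of _ 0])
  have f'H: "f' x = f x" if "x \<in> H" for x using f'r[of 0 x] k0 that by simp
  have sub: "subgrp H'"
    unfolding subgrp_def
  proof (intro conjI ballI)
    show "0 \<in> H'" using HH' subgrp_zero[OF H] by blast
  next
    fix x y assume "x \<in> H'" "y \<in> H'" then show "x + y \<in> H'" using addH' by blast
  next
    fix x assume "x \<in> H'"
    then obtain i where i: "i < k" "x - nm i g \<in> H" by (auto simp: H'_def)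
    show "-x \<in> H'"
    proof (cases "i = 0")
      case True then show ?thesis using i subgrp_neg[OF H i(2)] HH' by auto
    next
      case False
      have e: "-x - nm (k - i) g = -(x - nm i g) - nm k g"
        using nm_add[of "k - i" i g] i(1) by (simp add: algebra_simps)
      have "-x - nm (k - i) g \<in> H" unfolding e
        by (rule subgrp_diff[OF H subgrp_neg[OF H i(2)] kH])
      then show ?thesis using False i(1) by (auto simp: H'_def intro!: exI[of _ "k - i"])
    qed
  qed
  have gH': "g \<in> H'" using k1 subgrp_zero[OF H] by (auto simp: H'_def intro!: exI[of _ 1])
  have f'g: "f' g = \<omega>" using f'r[of 1 g] k1 subgrp_zero[OF H] f0 by simp
  have "char_on H' f'" unfolding char_on_def using addH' f'H[OF subgrp_zero[OF H]] f0 by simp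
  then show ?thesis using f'H f'g sub HH' gH' by blast
qed

lemma least_nm:
  fixes g :: "'g::{ab_group_add,finite}"
  assumes H: "subgrp H"
  defines "k \<equiv> LEAST k. 0 < k \<and> nm k g \<in> H"
  shows "0 < k" "nm k g \<in> H" "\<And>j. 0 < j \<Longrightarrow> j < k \<Longrightarrow> nm j g \<notin> H"
proof -
  have ex: "0 < CARD('g) \<and> nm CARD('g) g \<in> H" using nm_card[of g] subgrp_zero[OF H] by simp
  show "0 < k" "nm k g \<in> H" using LeastI[of "\<lambda>k. 0 < k \<and> nm k g \<in> H", OF ex] by (auto simp: k_def)
  show "\<And>j. 0 < j \<Longrightarrow> j < k \<Longrightarrow> nm j g \<notin> H" using not_less_Least k_def by blast
qed

lemma extend_all:
  fixes H :: "'g::{ab_group_add,finite} set"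
  shows "subgrp H \<Longrightarrow> char_on H f \<Longrightarrow> \<exists>F. char_on UNIV F \<and> (\<forall>x\<in>H. F x = f x)"
proof (induction "card (UNIV - H)" arbitrary: H f rule: less_induct)
  case less
  show ?case
  proof (cases "H = UNIV")
    case True then show ?thesis using less.prems by blast
  next
    case False
    then obtain g where g: "g \<notin> H" by blast
    define k where "k = (LEAST k. 0 < k \<and> nm k g \<in> H)"
    note kk = least_nm[OF less.prems(1), where g=g, folded k_def]
    obtain \<omega> where om: "\<omega> ^ k = f (nm k g)" using nth_root_exists[OF kk(1)] by blast
    define H' where "H' = {x. \<exists>j<k. x - nm j g \<in> H}"
    obtain f' where f': "char_on H' f'" "\<forall>x\<in>H. f' x = f x" "subgrp H'" "H \<subseteq> H'" "g \<in> H'"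
      using char_extend[OF less.prems g kk om] unfolding H'_def by blast
    have "card (UNIV - H') < card (UNIV - H)"
      using f'(4,5) g by (intro psubset_card_mono) auto
    from less.hyps[OF this f'(3,1)] obtain F where F: "char_on UNIV F" "\<forall>x\<in>H'. F x = f' x" by blast
    have "\<forall>x\<in>H. F x = f x" using F(2) f'(2,4) by auto
    with F(1) show ?thesis by blast
  qed
qed

lemma subgrp_zero_set: "subgrp {0::'g::ab_group_add}" by (simp add: subgrp_def)

lemma char_separate:
  fixes x :: "'g::{ab_group_add,finite}"
  assumes "x \<noteq> 0"
  shows "\<exists>F. char_on UNIV F \<and> F x \<noteq> 1"
proof -
  define k where "k = (LEAST k. 0 < k \<and> nm k x \<in> {0})"
  note kk = least_nm[OF subgrp_zero_set, where g=x, folded k_def]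
  have k2: "2 \<le> k"
  proof (rule ccontr)
    assume "\<not> 2 \<le> k" then have "k = 1" using kk(1) by simp
    then show False using kk(2) assms by simp
  qed
  have "card {z::complex. z ^ k = 1} = k" using card_roots_unity_eq kk(1) by blast
  then obtain \<omega> :: complex where om: "\<omega> ^ k = 1" "\<omega> \<noteq> 1"
  proof -
    assume r: "\<And>\<omega>::complex. \<omega> ^ k = 1 \<Longrightarrow> \<omega> \<noteq> 1 \<Longrightarrow> thesis"
    assume c: "card {z::complex. z ^ k = 1} = k"
    show thesis
    proof (rule ccontr)
      assume "\<not> thesis"
      have "{z::complex. z ^ k = 1} \<subseteq> {1}"
      proof
        fix z assume "z \<in> {z::complex. z ^ k = 1}"
        then have zk: "z ^ k = 1" by simp
        show "z \<in> {1}"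
        proof (rule ccontr)
          assume "z \<notin> {1}" then have "z \<noteq> 1" by simp
          from r[OF zk this] \<open>\<not> thesis\<close> show False by simp
        qed
      qed
      then have "card {z::complex. z ^ k = 1} \<le> card {1::complex}" by (intro card_mono) auto
      then have "card {z::complex. z ^ k = 1} \<le> 1" by simp
      then show False using c k2 by simp
    qed
  qed
  have ch0: "char_on {0} (\<lambda>_. 1)" by (simp add: char_on_def)
  have om': "\<omega> ^ k = (\<lambda>_. 1::complex) (nm k x)" using om by simp
  define H' where "H' = {y. \<exists>j<k. y - nm j x \<in> {0::'g}}"
  obtain f' where f': "char_on H' f'" "f' x = \<omega>" "subgrp H'" "x \<in> H'"
    using char_extend[OF subgrp_zero_set ch0 _ kk om'] assms unfolding H'_def by auto
  obtain F where "char_on UNIV F" "\<forall>y\<in>H'. F y = f' y" using extend_all[OF f'(3,1)] by blast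
  then show ?thesis using f' om by auto
qed

definition is_char :: "('g::{ab_group_add,finite} \<Rightarrow> complex) \<Rightarrow> bool" where
  "is_char f \<longleftrightarrow> char_on UNIV f"

lemma is_char_add: "is_char f \<Longrightarrow> f (x + y) = f x * f y"
  by (simp add: is_char_def char_on_def)
lemma is_char_0[simp]: "is_char f \<Longrightarrow> f 0 = 1"
  by (simp add: is_char_def char_on_def)

lemma subgrp_UNIV: "subgrp UNIV" by (simp add: subgrp_def)

lemma is_char_pow: "is_char f \<Longrightarrow> f x ^ CARD('g) = 1" for f :: "'g::{ab_group_add,finite} \<Rightarrow> complex"
proof -
  assume f: "is_char f"
  have "f (nm CARD('g) x) = f x ^ CARD('g)"
    using char_on_nm[OF subgrp_UNIV, of f x "CARD('g)"] f by (simp add: is_char_def)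
  then show ?thesis using nm_card[of x] f by simp
qed
lemma is_char_norm: "is_char f \<Longrightarrow> norm (f x) = 1" for f :: "'g::{ab_group_add,finite} \<Rightarrow> complex"
proof -
  assume f: "is_char f"
  have "norm (f x ^ CARD('g)) = 1" using is_char_pow[OF f, of x] by simp
  then have "norm (f x) ^ CARD('g) = 1 ^ CARD('g)" by (simp only: norm_power power_one)
  then show ?thesis by (rule power_eq_imp_eq_base) auto
qed

lemma is_char_nz: "is_char f \<Longrightarrow> f x \<noteq> 0"
proof
  assume "is_char f" "f x = 0"
  then show False using is_char_norm[of f x] by simp
qed

lemma is_char_cnj_mult: "is_char f \<Longrightarrow> cnj (f x) * f x = 1"
proof -
  assume f: "is_char f"
  have "complex_of_real ((norm (f x))\<^sup>2) = f x * cnj (f x)" by (rule complex_norm_square)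
  then show ?thesis using is_char_norm[OF f, of x] by (simp add: mult.commute)
qed

lemma is_char_neg: "is_char f \<Longrightarrow> f (-x) = cnj (f x)"
proof -
  assume f: "is_char f"
  have "f (-x) * f x = 1" using is_char_add[OF f, of "-x" x] f by simp
  moreover have "cnj (f x) * f x = 1" by (rule is_char_cnj_mult[OF f])
  ultimately show ?thesis using is_char_nz[OF f, of x]
    by (metis mult_cancel_right)
qed

lemma is_char_mult: "is_char f \<Longrightarrow> is_char g \<Longrightarrow> is_char (\<lambda>x. f x * g x)"
  by (simp add: is_char_def char_on_def mult_ac)
lemma is_char_cnj: "is_char f \<Longrightarrow> is_char (\<lambda>x. cnj (f x))"
  by (simp add: is_char_def char_on_def)
lemma is_char_one: "is_char (\<lambda>_. 1)"
  by (simp add: is_char_def char_on_def)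
lemma is_char_power: "is_char f \<Longrightarrow> is_char (\<lambda>x. f x ^ j)"
  by (simp add: is_char_def char_on_def power_mult_distrib)

lemma sum_char:
  fixes f :: "'g::{ab_group_add,finite} \<Rightarrow> complex"
  assumes f: "is_char f" and h: "f h \<noteq> 1"
  shows "(\<Sum>x\<in>UNIV. f x) = 0"
proof -
  have "(\<Sum>x\<in>UNIV. f x) = (\<Sum>x\<in>UNIV. f (x + h))"
    by (rule sum.reindex_bij_witness[of _ "\<lambda>y. y + h" "\<lambda>y. y - h"]) auto
  also have "\<dots> = f h * (\<Sum>x\<in>UNIV. f x)" by (simp add: is_char_add[OF f] sum_distrib_left mult_ac)
  finally have "(1 - f h) * (\<Sum>x\<in>UNIV. f x) = 0" by (simp add: algebra_simps)
  then show ?thesis using h by simp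
qed

lemma sum_char': "is_char f \<Longrightarrow> f \<noteq> (\<lambda>_. 1) \<Longrightarrow> (\<Sum>x\<in>UNIV. f x) = 0"
proof -
  assume f: "is_char f" and ne: "f \<noteq> (\<lambda>_. 1)"
  then obtain h where "f h \<noteq> 1" by auto
  then show ?thesis by (rule sum_char[OF f])
qed

lemma finite_chars: "finite {f::'g::{ab_group_add,finite} \<Rightarrow> complex. is_char f}"
proof -
  have "{f::'g \<Rightarrow> complex. is_char f} \<subseteq>
        {f. \<forall>x. (x \<in> UNIV \<longrightarrow> f x \<in> {z. z ^ CARD('g) = 1}) \<and> (x \<notin> UNIV \<longrightarrow> f x = 0)}"
    using is_char_pow by blast
  moreover have "finite {f::'g \<Rightarrow> complex. \<forall>x. (x \<in> UNIV \<longrightarrow> f x \<in> {z. z ^ CARD('g) = 1}) \<and> (x \<notin> UNIV \<longrightarrow> f x = 0)}"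
    by (intro finite_set_of_finite_funs finite_roots_unity) auto
  ultimately show ?thesis by (rule finite_subset)
qed

lemma char_eq_iff: "is_char f \<Longrightarrow> is_char g \<Longrightarrow> (\<forall>x. cnj (f x) * g x = 1) \<longleftrightarrow> f = g"
proof -
  assume f: "is_char f" and g: "is_char g"
  show ?thesis
  proof
    assume a: "\<forall>x. cnj (f x) * g x = 1"
    show "f = g"
    proof
      fix x
      have "cnj (f x) * g x = cnj (f x) * f x" using a is_char_cnj_mult[OF f] by simp
      moreover have "cnj (f x) \<noteq> 0" using is_char_nz[OF f] by simp
      ultimately show "f x = g x" by simp
    qed
  next
    assume "f = g" then show "\<forall>x. cnj (f x) * g x = 1" using is_char_cnj_mult[OF f] by simp
  qed
qed

lemma char_orth:
  fixes f g :: "'g::{ab_group_add,finite} \<Rightarrow> complex"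
  assumes f: "is_char f" and g: "is_char g"
  shows "(\<Sum>x\<in>UNIV. cnj (f x) * g x) = (if f = g then of_nat CARD('g) else 0)"
proof (cases "f = g")
  case True
  then show ?thesis using is_char_cnj_mult[OF f] by simp
next
  case False
  then obtain h where "cnj (f h) * g h \<noteq> 1" using char_eq_iff[OF f g] by blast
  then have "(\<Sum>x\<in>UNIV. cnj (f x) * g x) = 0"
    by (intro sum_char[OF is_char_mult[OF is_char_cnj[OF f] g]])
  then show ?thesis using False by simp
qed

lemma sum_chars_point:
  fixes x :: "'g::{ab_group_add,finite}"
  assumes x: "x \<noteq> 0"
  shows "(\<Sum>f\<in>{f. is_char f}. f x) = 0"
proof -
  obtain \<psi> where psi: "char_on UNIV \<psi>" "\<psi> x \<noteq> 1" using char_separate[OF x] by blast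
  then have p: "is_char \<psi>" by (simp add: is_char_def)
  let ?X = "{f::'g \<Rightarrow> complex. is_char f}"
  have "(\<Sum>f\<in>?X. f x) = (\<Sum>f\<in>?X. \<psi> x * f x)"
  proof (rule sum.reindex_bij_witness[of _ "\<lambda>f y. \<psi> y * f y" "\<lambda>f y. cnj (\<psi> y) * f y"])
    fix f assume f: "f \<in> ?X"
    show "(\<lambda>y. \<psi> y * (cnj (\<psi> y) * f y)) = f"
      using is_char_cnj_mult[OF p] by (simp add: mult.assoc[symmetric] mult.commute)
    show "(\<lambda>y. cnj (\<psi> y) * f y) \<in> ?X" using f is_char_mult[OF is_char_cnj[OF p]] by simp
    show "(\<lambda>y. cnj (\<psi> y) * (\<psi> y * f y)) = f"
      using is_char_cnj_mult[OF p] by (simp add: mult.assoc[symmetric])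
    show "(\<lambda>y. \<psi> y * f y) \<in> ?X" using f is_char_mult[OF p] by simp
    show "\<psi> x * (cnj (\<psi> x) * f x) = f x"
      using is_char_cnj_mult[OF p, of x] by (simp add: mult.assoc[symmetric] mult.commute)
  qed
  also have "\<dots> = \<psi> x * (\<Sum>f\<in>?X. f x)" by (simp add: sum_distrib_left)
  finally have "(1 - \<psi> x) * (\<Sum>f\<in>?X. f x) = 0" by (simp add: algebra_simps)
  then show ?thesis using psi(2) by simp
qed

lemma card_chars: "card {f::'g::{ab_group_add,finite} \<Rightarrow> complex. is_char f} = CARD('g)"
proof -
  let ?X = "{f::'g \<Rightarrow> complex. is_char f}"
  have "(\<Sum>f\<in>?X. \<Sum>x\<in>UNIV. f x) = (\<Sum>f\<in>?X. if f = (\<lambda>_. 1) then of_nat CARD('g) else 0)"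
    by (intro sum.cong refl) (auto simp: sum_char')
  also have "\<dots> = of_nat CARD('g)" using finite_chars is_char_one
    by (simp add: sum.delta[OF finite_chars])
  finally have 1: "(\<Sum>f\<in>?X. \<Sum>x\<in>UNIV. f x) = of_nat CARD('g)" .
  have "(\<Sum>x\<in>UNIV. \<Sum>f\<in>?X. f x) = (\<Sum>x\<in>(UNIV::'g set). if x = 0 then of_nat (card ?X) else 0)"
    by (intro sum.cong refl) (auto simp: sum_chars_point)
  also have "\<dots> = of_nat (card ?X)" by simp
  finally have 2: "(\<Sum>x\<in>UNIV. \<Sum>f\<in>?X. f x) = (of_nat (card ?X) :: complex)" .
  have sw: "(\<Sum>f\<in>?X. \<Sum>x\<in>UNIV. f x) = (\<Sum>x\<in>UNIV. \<Sum>f\<in>?X. f x)" by (rule sum.swap)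
  have "(of_nat (card ?X) :: complex) = of_nat CARD('g)" using 1 2 sw by simp
  then show ?thesis using of_nat_eq_iff by blast
qed

lemma poly_det: "poly (det (P :: real poly^'n^'n)) x = det (\<chi> i j. poly (P$i$j) x)"
  unfolding det_def by (simp add: poly_sum poly_prod)

lemma of_real_det: "complex_of_real (det (M :: real^'n^'n)) = det (\<chi> i j. complex_of_real (M$i$j))"
  unfolding det_def by (simp add: of_real_sum of_real_prod)

lemma char_poly_eval:
  "poly (char_poly_mat A) x = det (\<chi> i j. (if i = j then x else 0) - A$i$j)"
  unfolding char_poly_mat_def poly_det by (rule arg_cong[where f=det]) (auto simp: vec_eq_iff)

lemma sum_prod_sep:
  "(\<Sum>u\<in>(UNIV::('a::finite \<times> 'b::finite) set). f (fst u) * g (snd u)) = (\<Sum>a\<in>UNIV. f a) * (\<Sum>b\<in>UNIV. g b)"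
  for f g :: "_ \<Rightarrow> 'c::comm_semiring_1"
proof -
  have "(\<Sum>u\<in>(UNIV::('a \<times> 'b) set). f (fst u) * g (snd u)) = (\<Sum>u\<in>UNIV \<times> UNIV. f (fst u) * g (snd u))"
    by (simp add: UNIV_Times_UNIV)
  also have "\<dots> = (\<Sum>a\<in>UNIV. \<Sum>b\<in>UNIV. f a * g b)"
    by (subst sum.cartesian_product) (simp add: case_prod_beta)
  also have "\<dots> = (\<Sum>a\<in>UNIV. f a) * (\<Sum>b\<in>UNIV. g b)" by (simp add: sum_product)
  finally show ?thesis .
qed

lemma charpoly_factor:
  fixes A :: "real^('g::{ab_group_add,finite} \<times> bool)^('g \<times> bool)"
    and \<beta> :: "'g \<Rightarrow> ('g \<Rightarrow> complex)" and d :: "'g \<Rightarrow> bool \<Rightarrow> real"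
    and w :: "'g \<Rightarrow> bool \<Rightarrow> bool \<Rightarrow> complex"
  assumes bij: "bij_betw \<beta> UNIV {f. is_char f}"
  assumes eig: "\<And>y i h k. (\<Sum>u\<in>UNIV. complex_of_real (A $ (h,k) $ u) * (\<beta> y (fst u) * w y i (snd u)))
                 = complex_of_real (d y i) * (\<beta> y h * w y i k)"
  assumes nz: "\<And>y i. (\<Sum>j\<in>UNIV. cnj (w y i j) * w y i j) \<noteq> 0"
  assumes orth: "\<And>y. (\<Sum>j\<in>UNIV. cnj (w y False j) * w y True j) = 0"
  shows "char_poly_mat A = (\<Prod>u\<in>UNIV. [:- d (fst u) (snd u), 1:])"
proof -
  define U :: "complex^('g \<times> bool)^('g \<times> bool)" where
    "U = (\<chi> p q. \<beta> (fst q) (fst p) * w (fst q) (snd q) (snd p))"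
  define Uh :: "complex^('g \<times> bool)^('g \<times> bool)" where "Uh = (\<chi> p q. cnj (U $ q $ p))"
  define Ac :: "complex^('g \<times> bool)^('g \<times> bool)" where "Ac = (\<chi> p q. complex_of_real (A $ p $ q))"
  have chars: "is_char (\<beta> y)" for y using bij by (auto simp: bij_betw_def)
  have inj: "\<beta> y = \<beta> y' \<Longrightarrow> y = y'" for y y' using bij by (auto simp: bij_betw_def inj_on_def)
  have UhU: "(Uh ** U) $ p $ q = (if p = q then of_nat CARD('g) * (\<Sum>j\<in>UNIV. cnj (w (fst p) (snd p) j) * w (fst p) (snd p) j) else 0)" for p q
  proof -
    obtain y i where p: "p = (y, i)" by (cases p)
    obtain y' i' where q: "q = (y', i')" by (cases q)
    have "(Uh ** U) $ p $ q = (\<Sum>u\<in>UNIV. cnj (\<beta> y (fst u)) * \<beta> y' (fst u) * (cnj (w y i (snd u)) * w y' i' (snd u)))"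
      unfolding matrix_matrix_mult_def Uh_def U_def p q by (simp add: mult_ac)
    also have "\<dots> = (\<Sum>g\<in>UNIV. cnj (\<beta> y g) * \<beta> y' g) * (\<Sum>j\<in>UNIV. cnj (w y i j) * w y' i' j)"
      by (rule sum_prod_sep)
    also have "\<dots> = (if y = y' then of_nat CARD('g) else 0) * (\<Sum>j\<in>UNIV. cnj (w y i j) * w y' i' j)"
      using char_orth[OF chars chars, of y y'] inj by auto
    also have "\<dots> = (if p = q then of_nat CARD('g) * (\<Sum>j\<in>UNIV. cnj (w (fst p) (snd p) j) * w (fst p) (snd p) j) else 0)"
    proof (cases "y = y'")
      case True
      show ?thesis
      proof (cases "i = i'")
        case True then show ?thesis using \<open>y = y'\<close> p q by simp
      next
        case False
        have "(\<Sum>j\<in>UNIV. cnj (w y i j) * w y i' j) = 0"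
        proof (cases i)
          case True
          then have i': "i' = False" using False by simp
          have "(\<Sum>j\<in>UNIV. cnj (w y True j) * w y False j) = cnj (\<Sum>j\<in>UNIV. cnj (w y False j) * w y True j)"
            by (simp add: mult.commute)
          then show ?thesis using orth[of y] True i' by simp
        next
          case f: False
          then have i': "i' = True" using False by simp
          then show ?thesis using orth[of y] f by simp
        qed
        then show ?thesis using True False p q by simp
      qed
    next
      case False then show ?thesis using p q by simp
    qed
    finally show ?thesis .
  qed
  have "det (Uh ** U) = (\<Prod>p\<in>UNIV. (Uh ** U) $ p $ p)"
    by (rule det_diagonal) (simp add: UhU)
  also have "\<dots> \<noteq> 0" using nz by (simp add: UhU)
  finally have "det Uh * det U \<noteq> 0" by (simp add: det_mul)
  then have detU: "det U \<noteq> 0" by simp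
  define Dm :: "complex^('g \<times> bool)^('g \<times> bool)" where
    "Dm = (\<chi> p q. if p = q then complex_of_real (d (fst p) (snd p)) else 0)"
  have key: "((\<chi> p q. (if p = q then complex_of_real x else 0) - Ac $ p $ q) ** U)
           = U ** (\<chi> p q. (if p = q then complex_of_real x else 0) - Dm $ p $ q)" for x
  proof -
    have "((\<chi> p q. (if p = q then complex_of_real x else 0) - Ac $ p $ q) ** U) $ p $ q
        = (U ** (\<chi> p q. (if p = q then complex_of_real x else 0) - Dm $ p $ q)) $ p $ q" for p q
    proof -
      obtain h k where p: "p = (h, k)" by (cases p)
      obtain y i where q: "q = (y, i)" by (cases q)
      have "((\<chi> p q. (if p = q then complex_of_real x else 0) - Ac $ p $ q) ** U) $ p $ q
          = (\<Sum>u\<in>UNIV. (if p = u then complex_of_real x else 0) * U $ u $ q) - (\<Sum>u\<in>UNIV. Ac $ p $ u * U $ u $ q)"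
        unfolding matrix_matrix_mult_def by (simp add: left_diff_distrib sum_subtractf)
      also have "(\<Sum>u\<in>UNIV. (if p = u then complex_of_real x else 0) * U $ u $ q) = complex_of_real x * U $ p $ q"
        by (subst sum.cong[OF refl, of _ _ "\<lambda>u. if p = u then complex_of_real x * U $ u $ q else 0"]) auto
      also have "(\<Sum>u\<in>UNIV. Ac $ p $ u * U $ u $ q) = complex_of_real (d y i) * (\<beta> y h * w y i k)"
        using eig[of h k y i] unfolding Ac_def U_def p q by simp
      also have "complex_of_real x * U $ p $ q - complex_of_real (d y i) * (\<beta> y h * w y i k)
          = (U ** (\<chi> p q. (if p = q then complex_of_real x else 0) - Dm $ p $ q)) $ p $ q"
      proof -
        have "(U ** (\<chi> p q. (if p = q then complex_of_real x else 0) - Dm $ p $ q)) $ p $ q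
            = (\<Sum>u\<in>UNIV. U $ p $ u * (if u = q then complex_of_real x - complex_of_real (d y i) else 0))"
          unfolding matrix_matrix_mult_def Dm_def q by (auto intro!: sum.cong)
        also have "\<dots> = U $ p $ q * (complex_of_real x - complex_of_real (d y i))"
          by (simp add: if_distrib cong: if_cong)
        finally show ?thesis unfolding U_def p q by (simp add: algebra_simps)
      qed
      finally show ?thesis .
    qed
    then show ?thesis by (simp add: vec_eq_iff)
  qed
  have detD: "det (\<chi> p q. (if p = q then complex_of_real x else 0) - Dm $ p $ q)
      = (\<Prod>u\<in>UNIV. complex_of_real x - complex_of_real (d (fst u) (snd u)))" for x
    by (subst det_diagonal) (auto simp: Dm_def)
  have evalc: "complex_of_real (poly (char_poly_mat A) x) = (\<Prod>u\<in>UNIV. complex_of_real x - complex_of_real (d (fst u) (snd u)))" for x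
  proof -
    have "complex_of_real (poly (char_poly_mat A) x)
        = det (\<chi> p q. (if p = q then complex_of_real x else 0) - Ac $ p $ q)"
      unfolding char_poly_eval of_real_det Ac_def by (rule arg_cong[where f=det]) (auto simp: vec_eq_iff)
    moreover have "det (\<chi> p q. (if p = q then complex_of_real x else 0) - Ac $ p $ q) * det U
        = det U * (\<Prod>u\<in>UNIV. complex_of_real x - complex_of_real (d (fst u) (snd u)))"
    proof -
      have "det ((\<chi> p q. (if p = q then complex_of_real x else 0) - Ac $ p $ q) ** U)
          = det (U ** (\<chi> p q. (if p = q then complex_of_real x else 0) - Dm $ p $ q))"
        by (simp only: key)
      then show ?thesis by (simp only: det_mul detD)
    qed
    ultimately show ?thesis using detU by simp
  qed
  have "poly (char_poly_mat A) x = poly (\<Prod>u\<in>UNIV. [:- d (fst u) (snd u), 1:]) x" for x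
  proof -
    have "complex_of_real (\<Prod>u\<in>UNIV. x - d (fst u) (snd u)) = (\<Prod>u\<in>UNIV. complex_of_real x - complex_of_real (d (fst u) (snd u)))"
      by (simp add: of_real_prod)
    then have "complex_of_real (poly (char_poly_mat A) x) = complex_of_real (\<Prod>u\<in>UNIV. x - d (fst u) (snd u))"
      using evalc[of x] by simp
    then have "poly (char_poly_mat A) x = (\<Prod>u\<in>UNIV. x - d (fst u) (snd u))" by (simp only: of_real_eq_iff)
    then show ?thesis by (simp add: poly_prod)
  qed
  then show ?thesis using poly_eq_poly_eq_iff by blast
qed

lemma sum_bool: "(\<Sum>j\<in>(UNIV::bool set). f j) = f False + f True"
  by (simp add: UNIV_bool)

lemma herm2:
  fixes r s :: real and t :: complex
  shows "\<exists>d0 d1 :: real. \<exists>w0 w1 :: bool \<Rightarrow> complex.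
     (\<forall>k. (if k then cnj t * w0 False + of_real s * w0 True else of_real r * w0 False + t * w0 True) = of_real d0 * w0 k) \<and>
     (\<forall>k. (if k then cnj t * w1 False + of_real s * w1 True else of_real r * w1 False + t * w1 True) = of_real d1 * w1 k) \<and>
     (\<Sum>j\<in>UNIV. cnj (w0 j) * w0 j) \<noteq> 0 \<and> (\<Sum>j\<in>UNIV. cnj (w1 j) * w1 j) \<noteq> 0 \<and>
     (\<Sum>j\<in>UNIV. cnj (w0 j) * w1 j) = 0 \<and> d0 + d1 = r + s \<and> d0 * d1 = r * s - (cmod t)\<^sup>2"
proof (cases "t = 0")
  case True
  show ?thesis
    by (rule exI[of _ r], rule exI[of _ s], rule exI[of _ "\<lambda>k. if k then 0 else 1"],
        rule exI[of _ "\<lambda>k. if k then 1 else 0"]) (simp add: True sum_bool)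
next
  case False
  define \<delta> where "\<delta> = (r - s) / 2"
  define D where "D = sqrt (\<delta>\<^sup>2 + (cmod t)\<^sup>2)"
  have DD: "D\<^sup>2 = \<delta>\<^sup>2 + (cmod t)\<^sup>2" unfolding D_def by simp
  define d0 where "d0 = (r + s) / 2 + D"
  define d1 where "d1 = (r + s) / 2 - D"
  have e0: "d0 - r = D - \<delta>" "d0 - s = D + \<delta>" unfolding d0_def \<delta>_def by (simp_all add: field_simps)
  have e1: "d1 - r = - D - \<delta>" "d1 - s = - D + \<delta>" unfolding d1_def \<delta>_def by (simp_all add: field_simps)
  have root0: "(d0 - r) * (d0 - s) = (cmod t)\<^sup>2" unfolding e0 using DD by (simp add: power2_eq_square algebra_simps)
  have root1: "(d1 - r) * (d1 - s) = (cmod t)\<^sup>2" unfolding e1 using DD by (simp add: power2_eq_square algebra_simps)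
  have tt: "cnj t * t = complex_of_real ((cmod t)\<^sup>2)" using complex_norm_square[of t] by (simp add: mult.commute)
  have eqv: "(if k then cnj t * w False + of_real s * w True else of_real r * w False + t * w True) = of_real d * w k"
    if w: "w = (\<lambda>k. if k then complex_of_real (d - r) else t)" and rt: "(d - r) * (d - s) = (cmod t)\<^sup>2" for w d k
  proof (cases k)
    case True
    have "cnj t * t + complex_of_real s * complex_of_real (d - r) = complex_of_real ((cmod t)\<^sup>2 + s * (d - r))"
      using tt by simp
    also have "(cmod t)\<^sup>2 + s * (d - r) = d * (d - r)" using rt by (simp add: algebra_simps)
    finally show ?thesis using True w by simp
  next
    case False
    then show ?thesis using w by (simp add: algebra_simps)
  qed
  have nz: "(\<Sum>j\<in>UNIV. cnj (w j) * w j) \<noteq> 0" if w: "w = (\<lambda>k. if k then complex_of_real (d - r) else t)" for w d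
  proof -
    have "(\<Sum>j\<in>UNIV. cnj (w j) * w j) = complex_of_real ((cmod t)\<^sup>2 + (d - r)\<^sup>2)"
      using tt w by (simp add: sum_bool power2_eq_square)
    moreover have "(cmod t)\<^sup>2 + (d - r)\<^sup>2 > 0" using False by (simp add: add_pos_nonneg)
    ultimately show ?thesis by (metis of_real_eq_0_iff order_less_irrefl)
  qed
  have orth: "(cmod t)\<^sup>2 + (d0 - r) * (d1 - r) = 0"
    unfolding e0 e1 using DD by (simp add: power2_eq_square algebra_simps)
  show ?thesis
  proof (rule exI[of _ d0], rule exI[of _ d1], rule exI[of _ "\<lambda>k. if k then complex_of_real (d0 - r) else t"],
      rule exI[of _ "\<lambda>k. if k then complex_of_real (d1 - r) else t"], intro conjI allI)
    show "\<And>k. (if k then cnj t * (if False then complex_of_real (d0 - r) else t) + complex_of_real s * (if True then complex_of_real (d0 - r) else t)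
          else complex_of_real r * (if False then complex_of_real (d0 - r) else t) + t * (if True then complex_of_real (d0 - r) else t)) =
         complex_of_real d0 * (if k then complex_of_real (d0 - r) else t)"
      using eqv[OF refl root0] by simp
    show "\<And>k. (if k then cnj t * (if False then complex_of_real (d1 - r) else t) + complex_of_real s * (if True then complex_of_real (d1 - r) else t)
          else complex_of_real r * (if False then complex_of_real (d1 - r) else t) + t * (if True then complex_of_real (d1 - r) else t)) =
         complex_of_real d1 * (if k then complex_of_real (d1 - r) else t)"
      using eqv[OF refl root1] by simp
    show "(\<Sum>j\<in>UNIV. cnj (if j then complex_of_real (d0 - r) else t) * (if j then complex_of_real (d0 - r) else t)) \<noteq> 0"
      using nz[OF refl] by simp
    show "(\<Sum>j\<in>UNIV. cnj (if j then complex_of_real (d1 - r) else t) * (if j then complex_of_real (d1 - r) else t)) \<noteq> 0"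
      using nz[OF refl] by simp
    have "(\<Sum>j\<in>UNIV. cnj (if j then complex_of_real (d0 - r) else t) * (if j then complex_of_real (d1 - r) else t))
        = complex_of_real ((cmod t)\<^sup>2 + (d0 - r) * (d1 - r))" using tt by (simp add: sum_bool)
    then show "(\<Sum>j\<in>UNIV. cnj (if j then complex_of_real (d0 - r) else t) * (if j then complex_of_real (d1 - r) else t)) = 0"
      using orth by simp
    show "d0 + d1 = r + s" unfolding d0_def d1_def by simp
    have "d0 * d1 = ((r + s) / 2)\<^sup>2 - D\<^sup>2" unfolding d0_def d1_def by (simp add: power2_eq_square algebra_simps)
    also have "\<dots> = ((r + s) / 2)\<^sup>2 - ((r - s) / 2)\<^sup>2 - (cmod t)\<^sup>2" using DD unfolding \<delta>_def by simp
    also have "((r + s) / 2)\<^sup>2 - ((r - s) / 2)\<^sup>2 = r * s" by (simp add: power2_eq_square field_simps)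
    finally show "d0 * d1 = r * s - (cmod t)\<^sup>2" .
  qed
qed

lemma sum_if_UNIV: "(\<Sum>x\<in>(UNIV::'a::finite set). if x \<in> X then f x else 0) = (\<Sum>x\<in>X. f x)"
  using sum.inter_filter[of "UNIV::'a set" f "\<lambda>x. x \<in> X"] by simp

lemma shift_sum:
  fixes ch :: "'g::{ab_group_add,finite} \<Rightarrow> complex"
  assumes "is_char ch"
  shows "(\<Sum>g\<in>UNIV. if g - h \<in> X then ch g else 0) = ch h * (\<Sum>x\<in>X. ch x)"
proof -
  have "(\<Sum>g\<in>UNIV. if g - h \<in> X then ch g else 0) = (\<Sum>x\<in>UNIV. if x \<in> X then ch (x + h) else 0)"
  proof (rule sum.reindex_bij_witness[of _ "\<lambda>x. x + h" "\<lambda>g. g - h"])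
    fix a :: 'g
    show "a - h + h = a" by simp
    show "a + h - h = a" by simp
    show "a - h \<in> UNIV" by simp
    show "a + h \<in> UNIV" by simp
    show "(if a - h \<in> X then ch (a - h + h) else 0) = (if a - h \<in> X then ch a else 0)" by simp
  qed
  also have "\<dots> = (\<Sum>x\<in>X. ch (x + h))" by (rule sum_if_UNIV)
  also have "\<dots> = (\<Sum>x\<in>X. ch h * ch x)" by (intro sum.cong refl) (simp add: is_char_add[OF assms] mult.commute)
  also have "\<dots> = ch h * (\<Sum>x\<in>X. ch x)" by (simp add: sum_distrib_left)
  finally show ?thesis .
qed

lemma shift_sum':
  fixes ch :: "'g::{ab_group_add,finite} \<Rightarrow> complex"
  assumes "is_char ch"
  shows "(\<Sum>g\<in>UNIV. if h - g \<in> X then ch g else 0) = ch h * cnj (\<Sum>x\<in>X. ch x)"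
proof -
  have "(\<Sum>g\<in>UNIV. if h - g \<in> X then ch g else 0) = (\<Sum>x\<in>UNIV. if x \<in> X then ch (h - x) else 0)"
  proof (rule sum.reindex_bij_witness[of _ "\<lambda>x. h - x" "\<lambda>g. h - g"])
    fix a :: 'g
    show "h - (h - a) = a" by simp
    show "h - (h - a) = a" by simp
    show "h - a \<in> UNIV" by simp
    show "h - a \<in> UNIV" by simp
    show "(if h - a \<in> X then ch (h - (h - a)) else 0) = (if h - a \<in> X then ch a else 0)" by simp
  qed
  also have "\<dots> = (\<Sum>x\<in>X. ch (h - x))" by (rule sum_if_UNIV)
  also have "\<dots> = (\<Sum>x\<in>X. ch h * cnj (ch x))"
  proof (intro sum.cong refl)
    fix x show "ch (h - x) = ch h * cnj (ch x)"
      using is_char_add[OF assms, of h "-x"] is_char_neg[OF assms, of x] by simp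
  qed
  also have "\<dots> = ch h * cnj (\<Sum>x\<in>X. ch x)" by (simp add: sum_distrib_left)
  finally show ?thesis .
qed

lemma adj_entry: "semi_cayley_adj_matrix R S T $ (h,k) $ (g,j) = (if (\<not>k \<and> \<not>j \<and> g - h \<in> R) \<or> (k \<and> j \<and> g - h \<in> S) \<or> (\<not>k \<and> j \<and> g - h \<in> T) \<or> (k \<and> \<not>j \<and> h - g \<in> T) then 1 else 0)"
  by (simp add: semi_cayley_adj_matrix_def semi_cayley_adj_def)

lemma adj_eig:
  fixes R S T :: "'g::{ab_group_add,finite} set" and ch :: "'g \<Rightarrow> complex"
  assumes chi: "is_char ch"
  shows "(\<Sum>u\<in>UNIV. complex_of_real (semi_cayley_adj_matrix R S T $ (h,k) $ u) * (ch (fst u) * z (snd u)))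
    = ch h * (if k then cnj (\<Sum>x\<in>T. ch x) * z False + (\<Sum>x\<in>S. ch x) * z True
                else (\<Sum>x\<in>R. ch x) * z False + (\<Sum>x\<in>T. ch x) * z True)"
proof -
  let ?a = "\<lambda>u. complex_of_real (semi_cayley_adj_matrix R S T $ (h,k) $ u) * (ch (fst u) * z (snd u))"
  have "(\<Sum>u\<in>UNIV. ?a u) = (\<Sum>u\<in>UNIV \<times> UNIV. ?a u)" by (simp add: UNIV_Times_UNIV)
  also have "\<dots> = (\<Sum>g\<in>UNIV. \<Sum>j\<in>UNIV. ?a (g, j))" by (subst sum.cartesian_product) (simp add: case_prod_beta)
  also have "\<dots> = (\<Sum>g\<in>UNIV. ?a (g, False) + ?a (g, True))"
    by (simp only: sum_bool)
  also have "\<dots> = (\<Sum>g\<in>UNIV. ?a (g, False)) + (\<Sum>g\<in>UNIV. ?a (g, True))"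
    by (rule sum.distrib)
  finally have split: "(\<Sum>u\<in>UNIV. ?a u) = (\<Sum>g\<in>UNIV. ?a (g, False)) + (\<Sum>g\<in>UNIV. ?a (g, True))" .
  show ?thesis
  proof (cases k)
    case True
    have 1: "(\<Sum>g\<in>UNIV. ?a (g, False)) = (\<Sum>g\<in>UNIV. if h - g \<in> T then ch g else 0) * z False"
      unfolding sum_distrib_right by (intro sum.cong refl) (simp add: adj_entry True)
    have 2: "(\<Sum>g\<in>UNIV. ?a (g, True)) = (\<Sum>g\<in>UNIV. if g - h \<in> S then ch g else 0) * z True"
      unfolding sum_distrib_right by (intro sum.cong refl) (simp add: adj_entry True)
    show ?thesis unfolding split 1 2 shift_sum[OF chi] shift_sum'[OF chi] using True by (simp add: algebra_simps)
  next
    case False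
    have 1: "(\<Sum>g\<in>UNIV. ?a (g, False)) = (\<Sum>g\<in>UNIV. if g - h \<in> R then ch g else 0) * z False"
      unfolding sum_distrib_right by (intro sum.cong refl) (simp add: adj_entry False)
    have 2: "(\<Sum>g\<in>UNIV. ?a (g, True)) = (\<Sum>g\<in>UNIV. if g - h \<in> T then ch g else 0) * z True"
      unfolding sum_distrib_right by (intro sum.cong refl) (simp add: adj_entry False)
    show ?thesis unfolding split 1 2 shift_sum[OF chi] using False by (simp add: algebra_simps)
  qed
qed

lemma sym_real:
  fixes ch :: "'g::{ab_group_add,finite} \<Rightarrow> complex"
  assumes X: "uminus ` X = X" and ch: "is_char ch"
  shows "(\<Sum>x\<in>X. ch x) = complex_of_real (Re (\<Sum>x\<in>X. ch x))"
proof -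
  define z where "z = (\<Sum>x\<in>X. ch x)"
  have "cnj z = (\<Sum>x\<in>X. ch (- x))" unfolding z_def by (simp add: is_char_neg[OF ch])
  also have "\<dots> = (\<Sum>x\<in>uminus ` X. ch x)"
    by (subst sum.reindex) (auto simp: inj_on_def)
  also have "\<dots> = z" using X unfolding z_def by simp
  finally have "Im (cnj z) = Im z" by simp
  then have "Im z = 0" by simp
  then have "z = complex_of_real (Re z)" by (simp add: complex_eq_iff)
  then show ?thesis unfolding z_def .
qed

definition rr :: "'g set \<Rightarrow> ('g \<Rightarrow> complex) \<Rightarrow> real" where
  "rr X ch = Re (\<Sum>x\<in>X. ch x)"

definition eigdat :: "real \<Rightarrow> real \<Rightarrow> complex \<Rightarrow> (real \<times> real) \<times> ((bool \<Rightarrow> complex) \<times> (bool \<Rightarrow> complex)) \<Rightarrow> bool" where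
  "eigdat r s t q \<longleftrightarrow>
     (\<forall>k. (if k then cnj t * fst (snd q) False + of_real s * fst (snd q) True
            else of_real r * fst (snd q) False + t * fst (snd q) True) = of_real (fst (fst q)) * fst (snd q) k) \<and>
     (\<forall>k. (if k then cnj t * snd (snd q) False + of_real s * snd (snd q) True
            else of_real r * snd (snd q) False + t * snd (snd q) True) = of_real (snd (fst q)) * snd (snd q) k) \<and>
     (\<Sum>j\<in>UNIV. cnj (fst (snd q) j) * fst (snd q) j) \<noteq> 0 \<and> (\<Sum>j\<in>UNIV. cnj (snd (snd q) j) * snd (snd q) j) \<noteq> 0 \<and>
     (\<Sum>j\<in>UNIV. cnj (fst (snd q) j) * snd (snd q) j) = 0 \<and> fst (fst q) + snd (fst q) = r + s \<and>
     fst (fst q) * snd (fst q) = r * s - (cmod t)\<^sup>2"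

lemma herm2': "\<exists>q. eigdat r s t q"
proof -
  obtain d0 d1 w0 w1 where h:
     "(\<forall>k. (if k then cnj t * w0 False + of_real s * w0 True else of_real r * w0 False + t * w0 True) = of_real d0 * w0 k)"
     "(\<forall>k. (if k then cnj t * w1 False + of_real s * w1 True else of_real r * w1 False + t * w1 True) = of_real d1 * w1 k)"
     "(\<Sum>j\<in>UNIV. cnj (w0 j) * w0 j) \<noteq> 0" "(\<Sum>j\<in>UNIV. cnj (w1 j) * w1 j) \<noteq> 0"
     "(\<Sum>j\<in>UNIV. cnj (w0 j) * w1 j) = 0" "d0 + d1 = r + s" "d0 * d1 = r * s - (cmod t)\<^sup>2"
    using herm2[where r=r and s=s and t=t] by blast
  have "eigdat r s t ((d0, d1), (w0, w1))" unfolding eigdat_def fst_conv snd_conv using h by blast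
  then show ?thesis by blast
qed

lemma semi_cayley_charpoly:
  fixes R S T :: "'g::{ab_group_add,finite} set"
  assumes symR: "uminus ` R = R" and symS: "uminus ` S = S"
  shows "\<exists>(\<beta>::'g \<Rightarrow> 'g \<Rightarrow> complex) (d::'g \<Rightarrow> bool \<Rightarrow> real). bij_betw \<beta> UNIV {f. is_char f} \<and>
    char_poly_mat (semi_cayley_adj_matrix R S T) = (\<Prod>u\<in>UNIV. [:- d (fst u) (snd u), 1:]) \<and>
    (\<forall>y. d y False + d y True = rr R (\<beta> y) + rr S (\<beta> y) \<and>
         d y False * d y True = rr R (\<beta> y) * rr S (\<beta> y) - (cmod (\<Sum>x\<in>T. \<beta> y x))\<^sup>2)"
proof -
  obtain \<beta> :: "'g \<Rightarrow> 'g \<Rightarrow> complex" where bij: "bij_betw \<beta> UNIV {f. is_char f}"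
    using finite_same_card_bij[OF finite finite_chars] card_chars by (metis)
  have chars: "is_char (\<beta> y)" for y using bij by (auto simp: bij_betw_def)
  have "\<forall>y. \<exists>q. eigdat (rr R (\<beta> y)) (rr S (\<beta> y)) (\<Sum>x\<in>T. \<beta> y x) q" using herm2' by blast
  from choice[OF this] obtain Q where Q': "\<forall>y. eigdat (rr R (\<beta> y)) (rr S (\<beta> y)) (\<Sum>x\<in>T. \<beta> y x) (Q y)" by blast
  note Q = Q'[unfolded eigdat_def]
  define d where "d y i = (if i then snd (fst (Q y)) else fst (fst (Q y)))" for y i
  define w where "w y i = (if i then snd (snd (Q y)) else fst (snd (Q y)))" for y i
  have realR: "(\<Sum>x\<in>R. \<beta> y x) = of_real (rr R (\<beta> y))" for y
    unfolding rr_def by (rule sym_real[OF symR chars])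
  have realS: "(\<Sum>x\<in>S. \<beta> y x) = of_real (rr S (\<beta> y))" for y
    unfolding rr_def by (rule sym_real[OF symS chars])
  have eig: "(\<Sum>u\<in>UNIV. complex_of_real (semi_cayley_adj_matrix R S T $ (h,k) $ u) * (\<beta> y (fst u) * w y i (snd u)))
                 = complex_of_real (d y i) * (\<beta> y h * w y i k)" for y i h k
  proof -
    have "(\<Sum>u\<in>UNIV. complex_of_real (semi_cayley_adj_matrix R S T $ (h,k) $ u) * (\<beta> y (fst u) * w y i (snd u)))
       = \<beta> y h * (if k then cnj (\<Sum>x\<in>T. \<beta> y x) * w y i False + of_real (rr S (\<beta> y)) * w y i True
                else of_real (rr R (\<beta> y)) * w y i False + (\<Sum>x\<in>T. \<beta> y x) * w y i True)"
      using adj_eig[OF chars, where R=R and S=S and T=T and h=h and k=k and z="w y i"] realR realS by simp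
    also have "(if k then cnj (\<Sum>x\<in>T. \<beta> y x) * w y i False + of_real (rr S (\<beta> y)) * w y i True
                else of_real (rr R (\<beta> y)) * w y i False + (\<Sum>x\<in>T. \<beta> y x) * w y i True) = of_real (d y i) * w y i k"
    proof -
      have q: "\<forall>k. (if k then cnj (\<Sum>x\<in>T. \<beta> y x) * fst (snd (Q y)) False + of_real (rr S (\<beta> y)) * fst (snd (Q y)) True
            else of_real (rr R (\<beta> y)) * fst (snd (Q y)) False + (\<Sum>x\<in>T. \<beta> y x) * fst (snd (Q y)) True) = of_real (fst (fst (Q y))) * fst (snd (Q y)) k"
        "\<forall>k. (if k then cnj (\<Sum>x\<in>T. \<beta> y x) * snd (snd (Q y)) False + of_real (rr S (\<beta> y)) * snd (snd (Q y)) True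
            else of_real (rr R (\<beta> y)) * snd (snd (Q y)) False + (\<Sum>x\<in>T. \<beta> y x) * snd (snd (Q y)) True) = of_real (snd (fst (Q y))) * snd (snd (Q y)) k"
        using Q[rule_format, of y] by blast+
      show ?thesis
      proof (cases i)
        case True then show ?thesis unfolding d_def w_def using spec[OF q(2), of k] by (cases k) simp_all
      next
        case False then show ?thesis unfolding d_def w_def using spec[OF q(1), of k] by (cases k) simp_all
      qed
    qed
    finally show ?thesis by simp
  qed
  have nz: "(\<Sum>j\<in>UNIV. cnj (w y i j) * w y i j) \<noteq> 0" for y i
    using Q[rule_format, of y] unfolding w_def by (cases i) auto
  have orth: "(\<Sum>j\<in>UNIV. cnj (w y False j) * w y True j) = 0" for y
    using Q[rule_format, of y] unfolding w_def by auto
  have cp: "char_poly_mat (semi_cayley_adj_matrix R S T) = (\<Prod>u\<in>UNIV. [:- d (fst u) (snd u), 1:])"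
    by (rule charpoly_factor[OF bij eig nz orth])
  have "\<forall>y. d y False + d y True = rr R (\<beta> y) + rr S (\<beta> y) \<and>
         d y False * d y True = rr R (\<beta> y) * rr S (\<beta> y) - (cmod (\<Sum>x\<in>T. \<beta> y x))\<^sup>2"
    using Q unfolding d_def by auto
  then show ?thesis using bij cp by (intro exI[of _ \<beta>] exI[of _ d]) simp
qed

lemma size_filter_sum:
  "finite A \<Longrightarrow> size (filter_mset P (\<Sum>u\<in>A. {#f u#})) = card {u\<in>A. P (f u)}"
proof (induction A rule: finite_induct)
  case empty then show ?case by simp
next
  case (insert a A)
  have "{u \<in> insert a A. P (f u)} = (if P (f a) then insert a {u \<in> A. P (f u)} else {u \<in> A. P (f u)})" by auto
  then show ?case using insert by (auto simp: card_insert_if)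
qed

lemma kth3_le:
  fixes dd :: "'n::finite \<Rightarrow> real"
  assumes n3: "3 \<le> CARD('n)" and few: "card {u. dd u > c} \<le> 2"
  shows "rev (sorted_list_of_multiset (\<Sum>u\<in>UNIV. {#dd u#})) ! 2 \<le> c"
proof (rule ccontr)
  define M where "M = (\<Sum>u\<in>(UNIV::'n set). {#dd u#})"
  define s where "s = sorted_list_of_multiset M"
  define L where "L = rev s"
  assume "\<not> rev (sorted_list_of_multiset (\<Sum>u\<in>UNIV. {#dd u#})) ! 2 \<le> c"
  then have L2: "L ! 2 > c" unfolding L_def s_def M_def by simp
  have sizeM: "size M = CARD('n)" unfolding M_def by simp
  have lenL: "length L = CARD('n)" unfolding L_def s_def
    by (metis length_rev mset_sorted_list_of_multiset size_mset sizeM)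
  have sorted: "sorted s" unfolding s_def by simp
  have lens: "length s = CARD('n)" using lenL unfolding L_def by simp
  have "L ! 0 = s ! (CARD('n) - Suc 0)" "L ! 1 = s ! (CARD('n) - Suc 1)" "L ! 2 = s ! (CARD('n) - Suc 2)"
    unfolding L_def using n3 lens by (simp_all add: rev_nth)
  moreover have "s ! (CARD('n) - Suc 2) \<le> s ! (CARD('n) - Suc 0)" "s ! (CARD('n) - Suc 2) \<le> s ! (CARD('n) - Suc 1)"
    using sorted lens n3 by (auto simp: sorted_iff_nth_mono)
  ultimately have L01: "L ! 0 > c" "L ! 1 > c" using L2 by linarith+
  have t3: "take 3 L = [L ! 0, L ! 1, L ! 2]" using lenL n3
    by (simp add: take_Suc_conv_app_nth numeral_3_eq_3 numeral_2_eq_2)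
  have "mset L = M" unfolding L_def s_def by simp
  then have Meq: "M = mset (take 3 L) + mset (drop 3 L)" by (metis append_take_drop_id mset_append)
  have "size (filter_mset (\<lambda>x. x > c) M) = size (filter_mset (\<lambda>x. x > c) (mset (take 3 L))) + size (filter_mset (\<lambda>x. x > c) (mset (drop 3 L)))"
    by (subst Meq) simp
  then have "size (filter_mset (\<lambda>x. x > c) M) \<ge> size (filter_mset (\<lambda>x. x > c) (mset (take 3 L)))" by simp
  moreover have "size (filter_mset (\<lambda>x. x > c) (mset (take 3 L))) = 3" using t3 L01 L2 by simp
  moreover have "size (filter_mset (\<lambda>x. x > c) M) = card {u. dd u > c}"
    unfolding M_def using size_filter_sum[of "UNIV::'n set" "\<lambda>x. x > c" dd] by simp
  ultimately show False using few by simp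
qed

definition pp :: "real \<Rightarrow> real" where "pp y = max y 0"

lemma pp_ge: "y \<le> pp y" "0 \<le> pp y" by (auto simp: pp_def)

lemma rr_le_card:
  fixes ch :: "'g::{ab_group_add,finite} \<Rightarrow> complex"
  assumes ch: "is_char ch"
  shows "rr X ch \<le> card X"
proof -
  have "rr X ch = (\<Sum>x\<in>X. Re (ch x))" by (simp add: rr_def Re_sum)
  also have "\<dots> \<le> (\<Sum>x\<in>X. 1)"
  proof (rule sum_mono)
    fix x show "Re (ch x) \<le> 1" using complex_Re_le_cmod[of "ch x"] is_char_norm[OF ch, of x] by simp
  qed
  finally show ?thesis by simp
qed

lemma sum_split_compl:
  fixes f :: "'a::finite \<Rightarrow> complex"
  shows "(\<Sum>x\<in>UNIV. f x) = (\<Sum>x\<in>X. f x) + (\<Sum>x\<in>UNIV - X. f x)"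
  by (metis add.commute finite sum.subset_diff top_greatest)

lemma rr_le_compl:
  fixes ch :: "'g::{ab_group_add,finite} \<Rightarrow> complex"
  assumes ch: "is_char ch" and nt: "ch \<noteq> (\<lambda>_. 1)"
  shows "rr X ch \<le> real CARD('g) - card X"
proof -
  have "(\<Sum>x\<in>X. ch x) = - (\<Sum>x\<in>UNIV - X. ch x)"
    using sum_split_compl[of ch X] sum_char'[OF ch nt] by (simp add: eq_neg_iff_add_eq_0 add.commute)
  then have "rr X ch = (\<Sum>x\<in>UNIV - X. - Re (ch x))" by (simp add: rr_def Re_sum sum_negf)
  also have "\<dots> \<le> (\<Sum>x\<in>UNIV - X. 1)"
  proof (rule sum_mono)
    fix x show "- Re (ch x) \<le> 1"
      using abs_Re_le_cmod[of "ch x"] is_char_norm[OF ch, of x] by simp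
  qed
  also have "\<dots> = real (card (UNIV - X))" by simp
  also have "\<dots> = real CARD('g) - card X"
    by (simp add: card_Diff_subset of_nat_diff card_mono)
  finally show ?thesis .
qed

lemma cmod_sum_le:
  fixes ch :: "'g::{ab_group_add,finite} \<Rightarrow> complex"
  assumes ch: "is_char ch"
  shows "cmod (\<Sum>x\<in>X. ch x) \<le> card X"
proof -
  have "cmod (\<Sum>x\<in>X. ch x) \<le> (\<Sum>x\<in>X. cmod (ch x))" by (rule norm_sum)
  also have "\<dots> = card X" using is_char_norm[OF ch] by simp
  finally show ?thesis .
qed

lemma eig_root:
  fixes r s T d0 d1 :: real
  assumes "d0 + d1 = r + s" "d0 * d1 = r * s - T\<^sup>2"
  shows "(d0 - r) * (d0 - s) = T\<^sup>2" "(d1 - r) * (d1 - s) = T\<^sup>2"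
proof -
  have d1: "d1 = r + s - d0" using assms(1) by simp
  show "(d0 - r) * (d0 - s) = T\<^sup>2" using assms(2) unfolding d1 by (simp add: algebra_simps power2_eq_square)
  have d0: "d0 = r + s - d1" using assms(1) by simp
  show "(d1 - r) * (d1 - s) = T\<^sup>2" using assms(2) unfolding d0 by (simp add: algebra_simps power2_eq_square)
qed

lemma both_gt:
  fixes r s T d0 d1 c :: real
  assumes "d0 + d1 = r + s" "d0 * d1 = r * s - T\<^sup>2" "d0 > c" "d1 > c"
  shows "r > c" "s > c" "(r - c) * (s - c) > T\<^sup>2"
proof -
  have "(r - c) * (s - c) - T\<^sup>2 = (r * s - T\<^sup>2) - c * (r + s) + c\<^sup>2" by (simp add: algebra_simps power2_eq_square)
  also have "\<dots> = d0 * d1 - c * (d0 + d1) + c\<^sup>2" using assms(1,2) by simp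
  also have "\<dots> = (d0 - c) * (d1 - c)" by (simp add: algebra_simps power2_eq_square)
  finally have e: "(r - c) * (s - c) - T\<^sup>2 = (d0 - c) * (d1 - c)" .
  have "(d0 - c) * (d1 - c) > 0" using assms(3,4) by simp
  then show g: "(r - c) * (s - c) > T\<^sup>2" using e by simp
  have sum: "(r - c) + (s - c) > 0" using assms(1,3,4) by simp
  have prod: "(r - c) * (s - c) > 0" using g by (smt (verit) zero_le_power2)
  show "r > c" using sum prod by (smt (verit) mult_nonpos_nonneg mult_nonneg_nonpos)
  show "s > c" using sum prod by (smt (verit) mult_nonpos_nonneg mult_nonneg_nonpos)
qed

lemma case_i:
  fixes ch :: "'g::{ab_group_add,finite} \<Rightarrow> complex"
  assumes ch: "is_char ch" and nt: "ch \<noteq> (\<lambda>_. 1)"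
    and e: "d0 + d1 = rr R ch + rr S ch" "d0 * d1 = rr R ch * rr S ch - T\<^sup>2"
    and gt: "d0 > 2 * real CARD('g) / 3" "d1 > 2 * real CARD('g) / 3"
  shows False
proof -
  have "rr R ch > 2 * real CARD('g) / 3" using both_gt[OF e gt] by simp
  moreover have "rr R ch \<le> card R" by (rule rr_le_card[OF ch])
  moreover have "rr R ch \<le> real CARD('g) - card R" by (rule rr_le_compl[OF ch nt])
  moreover have "real CARD('g) > 0" by simp
  ultimately show False by linarith
qed

lemma case_ii:
  fixes ch :: "'g::{ab_group_add,finite} \<Rightarrow> complex"
  assumes ch: "is_char ch" and nt: "ch \<noteq> (\<lambda>_. 1)"
    and e0: "a0 + a1 = real (card R) + real (card S)" "a0 * a1 = real (card R) * real (card S) - (real (card T))\<^sup>2"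
    and gt0: "a0 > 2 * real CARD('g) / 3" "a1 > 2 * real CARD('g) / 3"
    and root: "(d - rr R ch) * (d - rr S ch) = (cmod (\<Sum>x\<in>T. ch x))\<^sup>2"
    and gt: "d > 2 * real CARD('g) / 3"
  shows False
proof -
  define n where "n = real CARD('g)"
  define a where "a = real (card R)"
  define b where "b = real (card S)"
  define c where "c = 2 * n / 3"
  have ab: "a > c" "b > c" "(a - c) * (b - c) > (real (card T))\<^sup>2"
    using both_gt[OF e0 gt0] unfolding a_def b_def c_def n_def by auto
  have an: "a \<le> n" unfolding a_def n_def by (simp add: card_mono)
  have bn: "b \<le> n" unfolding b_def n_def by (simp add: card_mono)
  have r: "rr R ch \<le> n - a" using rr_le_compl[OF ch nt] unfolding n_def a_def .
  have s: "rr S ch \<le> n - b" using rr_le_compl[OF ch nt] unfolding n_def b_def .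
  have t: "cmod (\<Sum>x\<in>T. ch x) \<le> card T" by (rule cmod_sum_le[OF ch])
  have dr: "d - rr R ch > n / 3" using r ab gt unfolding c_def n_def by linarith
  have ds: "d - rr S ch > n / 3" using s ab gt unfolding c_def n_def by linarith
  have "(n / 3) * (n / 3) < (d - rr R ch) * (d - rr S ch)"
    using dr ds by (intro mult_strict_mono) (auto simp: n_def)
  moreover have "(a - c) * (b - c) \<le> (n / 3) * (n / 3)"
    using ab an bn unfolding c_def by (intro mult_mono) auto
  moreover have "(cmod (\<Sum>x\<in>T. ch x))\<^sup>2 \<le> (real (card T))\<^sup>2"
    using t by (intro power_mono) auto
  ultimately show False using ab(3) root by linarith
qed

lemma pow_expand:
  fixes v cv :: complex
  assumes h: "cv * v = 1"
  shows "(v + cv)^2 = v^2 + 2 + cv^2"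
    "(v + cv)^4 = v^4 + 4 * v^2 + 6 + 4 * cv^2 + cv^4"
    "(v + cv)^6 = v^6 + 6 * v^4 + 15 * v^2 + 20 + 15 * cv^2 + 6 * cv^4 + cv^6"
  using h by algebra+

lemma re_pow_of_real:
  fixes v :: complex
  assumes h: "cnj v * v = 1"
  shows "complex_of_real ((2 * Re v)^2) = v^2 + 2 + cnj v^2"
    "complex_of_real ((2 * Re v)^4) = v^4 + 4 * v^2 + 6 + 4 * cnj v^2 + cnj v^4"
    "complex_of_real ((2 * Re v)^6) = v^6 + 6 * v^4 + 15 * v^2 + 20 + 15 * cnj v^2 + 6 * cnj v^4 + cnj v^6"
proof -
  have e: "complex_of_real (2 * Re v) = v + cnj v" by (simp add: complex_add_cnj)
  show "complex_of_real ((2 * Re v)^2) = v^2 + 2 + cnj v^2" unfolding of_real_power e by (rule pow_expand(1)[OF h])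
  show "complex_of_real ((2 * Re v)^4) = v^4 + 4 * v^2 + 6 + 4 * cnj v^2 + cnj v^4" unfolding of_real_power e by (rule pow_expand(2)[OF h])
  show "complex_of_real ((2 * Re v)^6) = v^6 + 6 * v^4 + 15 * v^2 + 20 + 15 * cnj v^2 + 6 * cnj v^4 + cnj v^6" unfolding of_real_power e by (rule pow_expand(3)[OF h])
qed

lemma sum_cnj_pow0: "(\<Sum>x\<in>A. v x ^ j) = 0 \<Longrightarrow> (\<Sum>x\<in>A. cnj (v x) ^ j) = 0"
proof -
  assume h: "(\<Sum>x\<in>A. v x ^ j) = 0"
  have "(\<Sum>x\<in>A. cnj (v x) ^ j) = cnj (\<Sum>x\<in>A. v x ^ j)" by (simp add: cnj_sum)
  then show ?thesis using h by simp
qed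

lemma moment2:
  fixes v :: "'a::finite \<Rightarrow> complex"
  assumes u: "\<And>x. cnj (v x) * v x = 1" and s2: "(\<Sum>x\<in>UNIV. v x ^ 2) = 0"
  shows "(\<Sum>x\<in>UNIV. (Re (v x))^2) = real CARD('a) / 2"
proof -
  have "complex_of_real (\<Sum>x\<in>UNIV. (2 * Re (v x))^2) = (\<Sum>x\<in>UNIV. v x^2 + 2 + cnj (v x)^2)"
    unfolding of_real_sum by (rule sum.cong[OF refl]) (rule re_pow_of_real(1)[OF u])
  also have "\<dots> = (\<Sum>x\<in>UNIV. v x^2) + 2 * of_nat CARD('a) + (\<Sum>x\<in>UNIV. cnj (v x)^2)"
    by (simp add: sum.distrib)
  also have "\<dots> = complex_of_real (2 * real CARD('a))" using s2 sum_cnj_pow0[OF s2] by simp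
  finally have "(\<Sum>x\<in>UNIV. (2 * Re (v x))^2) = 2 * real CARD('a)" by (simp only: of_real_eq_iff)
  then show ?thesis by (simp add: power_mult_distrib sum_distrib_left[symmetric])
qed

lemma moment4:
  fixes v :: "'a::finite \<Rightarrow> complex"
  assumes u: "\<And>x. cnj (v x) * v x = 1" and s2: "(\<Sum>x\<in>UNIV. v x ^ 2) = 0" and s4: "(\<Sum>x\<in>UNIV. v x ^ 4) = 0"
  shows "(\<Sum>x\<in>UNIV. (Re (v x))^4) = 3 * real CARD('a) / 8"
proof -
  have "complex_of_real (\<Sum>x\<in>UNIV. (2 * Re (v x))^4) = (\<Sum>x\<in>UNIV. v x^4 + 4 * v x^2 + 6 + 4 * cnj (v x)^2 + cnj (v x)^4)"
    unfolding of_real_sum by (rule sum.cong[OF refl]) (rule re_pow_of_real(2)[OF u])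
  also have "\<dots> = (\<Sum>x\<in>UNIV. v x^4) + 4 * (\<Sum>x\<in>UNIV. v x^2) + 6 * of_nat CARD('a) + 4 * (\<Sum>x\<in>UNIV. cnj (v x)^2) + (\<Sum>x\<in>UNIV. cnj (v x)^4)"
    by (simp add: sum.distrib sum_distrib_left)
  also have "\<dots> = complex_of_real (6 * real CARD('a))" using s2 s4 sum_cnj_pow0[OF s2] sum_cnj_pow0[OF s4] by simp
  finally have "(\<Sum>x\<in>UNIV. (2 * Re (v x))^4) = 6 * real CARD('a)" by (simp only: of_real_eq_iff)
  then show ?thesis by (simp add: power_mult_distrib sum_distrib_left[symmetric])
qed

lemma moment6:
  fixes v :: "'a::finite \<Rightarrow> complex"
  assumes u: "\<And>x. cnj (v x) * v x = 1" and s2: "(\<Sum>x\<in>UNIV. v x ^ 2) = 0" and s4: "(\<Sum>x\<in>UNIV. v x ^ 4) = 0"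
    and s6: "(\<Sum>x\<in>UNIV. v x ^ 6) = 0"
  shows "(\<Sum>x\<in>UNIV. (Re (v x))^6) = 5 * real CARD('a) / 16"
proof -
  have "complex_of_real (\<Sum>x\<in>UNIV. (2 * Re (v x))^6) = (\<Sum>x\<in>UNIV. v x^6 + 6 * v x^4 + 15 * v x^2 + 20 + 15 * cnj (v x)^2 + 6 * cnj (v x)^4 + cnj (v x)^6)"
    unfolding of_real_sum by (rule sum.cong[OF refl]) (rule re_pow_of_real(3)[OF u])
  also have "\<dots> = (\<Sum>x\<in>UNIV. v x^6) + 6 * (\<Sum>x\<in>UNIV. v x^4) + 15 * (\<Sum>x\<in>UNIV. v x^2) + 20 * of_nat CARD('a)
      + 15 * (\<Sum>x\<in>UNIV. cnj (v x)^2) + 6 * (\<Sum>x\<in>UNIV. cnj (v x)^4) + (\<Sum>x\<in>UNIV. cnj (v x)^6)"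
    by (simp add: sum.distrib sum_distrib_left)
  also have "\<dots> = complex_of_real (20 * real CARD('a))" using s2 s4 s6 sum_cnj_pow0[OF s2] sum_cnj_pow0[OF s4] sum_cnj_pow0[OF s6] by simp
  finally have "(\<Sum>x\<in>UNIV. (2 * Re (v x))^6) = 20 * real CARD('a)" by (simp only: of_real_eq_iff)
  then show ?thesis by (simp add: power_mult_distrib sum_distrib_left[symmetric])
qed

lemma maj6: "pp y \<le> y / 2 + 11/108 + 25/36 * y^2 - 4/9 * y^4 + 4/27 * y^6"
proof -
  define a where "a = \<bar>y\<bar>"
  have a0: "a \<ge> 0" unfolding a_def by simp
  have p: "y^2 = a^2" "y^4 = a^4" "y^6 = a^6" unfolding a_def by (simp_all add: power_even_abs_numeral)
  have pp: "pp y = y / 2 + a / 2" unfolding pp_def a_def by (simp add: max_def abs_if)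
  have fac: "11/108 + 25/36 * a^2 - 4/9 * a^4 + 4/27 * a^6 - a / 2 = (a - 1/2)^2 * (a - 1)^2 * (11/27 + 4/9 * a + 4/27 * a^2)"
    by algebra
  have "(a - 1/2)^2 * (a - 1)^2 * (11/27 + 4/9 * a + 4/27 * a^2) \<ge> 0"
    using a0 by (intro mult_nonneg_nonneg) auto
  then show ?thesis using fac pp p by linarith
qed

lemma maj4: "\<bar>y\<bar> \<le> 1 \<Longrightarrow> pp y \<le> y / 2 + 43/384 + 29/48 * y^2 - 5/24 * y^4"
proof -
  assume y1: "\<bar>y\<bar> \<le> 1"
  define a where "a = \<bar>y\<bar>"
  have a0: "a \<ge> 0" "a \<le> 1" unfolding a_def using y1 by simp_all
  have p: "y^2 = a^2" "y^4 = a^4" unfolding a_def by (simp_all add: power_even_abs_numeral)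
  have pp: "pp y = y / 2 + a / 2" unfolding pp_def a_def by (simp add: max_def abs_if)
  have fac: "43/384 + 29/48 * a^2 - 5/24 * a^4 - a / 2 = (a - 1/2)^2 * (43/96 - 5/24 * a - 5/24 * a^2)"
    by algebra
  have "a^2 \<le> 1" using a0 by (simp add: power_le_one)
  then have "43/96 - 5/24 * a - 5/24 * a^2 \<ge> 0" using a0 by linarith
  then have "(a - 1/2)^2 * (43/96 - 5/24 * a - 5/24 * a^2) \<ge> 0" by simp
  then show ?thesis using fac pp p by linarith
qed

definition Qw :: "('g::finite \<Rightarrow> complex) \<Rightarrow> complex \<Rightarrow> real" where
  "Qw ch w = (\<Sum>x\<in>UNIV. pp (Re (w * ch x)))"

lemma char_shift:
  fixes ch :: "'g::{ab_group_add,finite} \<Rightarrow> complex" and F :: "complex \<Rightarrow> real"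
  assumes ch: "is_char ch"
  shows "(\<Sum>x\<in>UNIV. F (ch x)) = (\<Sum>x\<in>UNIV. F (ch g0 * ch x))"
proof -
  have "(\<Sum>x\<in>UNIV. F (ch x)) = (\<Sum>x\<in>UNIV. F (ch (x + g0)))"
  proof (rule sum.reindex_bij_witness[of _ "\<lambda>x. x + g0" "\<lambda>x. x - g0"])
    fix a :: 'g
    show "a - g0 + g0 = a" by simp
    show "a + g0 - g0 = a" by simp
    show "a - g0 \<in> UNIV" by simp
    show "a + g0 \<in> UNIV" by simp
    show "F (ch (a - g0 + g0)) = F (ch a)" by simp
  qed
  also have "\<dots> = (\<Sum>x\<in>UNIV. F (ch g0 * ch x))" by (simp add: is_char_add[OF ch] mult.commute)
  finally show ?thesis .
qed

lemma unit_mult: "cmod w = 1 \<Longrightarrow> is_char ch \<Longrightarrow> cnj (w * ch x) * (w * ch x) = 1"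
proof -
  assume w: "cmod w = 1" and ch: "is_char ch"
  have "cnj w * w = 1" using complex_norm_square[of w] w by (simp add: mult.commute)
  then show ?thesis using is_char_cnj_mult[OF ch, of x] by (simp add: mult_ac)
qed

lemma char_pow_sum0:
  fixes ch :: "'g::{ab_group_add,finite} \<Rightarrow> complex"
  assumes ch: "is_char ch" and ne: "ch g0 ^ j \<noteq> 1"
  shows "(\<Sum>x\<in>UNIV. (w * ch x) ^ j) = 0"
proof -
  have "(\<Sum>x\<in>UNIV. ch x ^ j) = 0" by (rule sum_char[OF is_char_power[OF ch] ne])
  then show ?thesis by (simp add: power_mult_distrib sum_distrib_left[symmetric])
qed

lemma re_abs_le1: "cnj v * v = 1 \<Longrightarrow> \<bar>Re v\<bar> \<le> 1"
proof -
  assume h: "cnj v * v = 1"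
  have "complex_of_real ((cmod v)\<^sup>2) = 1" using complex_norm_square[of v] h by (simp add: mult.commute)
  then have "(cmod v)\<^sup>2 = 1" by (metis of_real_eq_1_iff)
  then have "cmod v = 1" using norm_ge_zero[of v] by (auto simp: power2_eq_1_iff)
  then show ?thesis using abs_Re_le_cmod[of v] by simp
qed

lemma caseA:
  fixes ch :: "'g::{ab_group_add,finite} \<Rightarrow> complex"
  assumes ch: "is_char ch" and A: "\<And>j. j \<in> {1,2,3,4,5,6} \<Longrightarrow> ch g0 ^ j \<noteq> 1" and w: "cmod w = 1"
  shows "Qw ch w \<le> 71/216 * real CARD('g)"
proof -
  define v where "v x = w * ch x" for x
  have u: "cnj (v x) * v x = 1" for x unfolding v_def by (rule unit_mult[OF w ch])
  have s: "(\<Sum>x\<in>UNIV. v x ^ j) = 0" if "j \<in> {1,2,3,4,5,6}" for j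
    unfolding v_def by (rule char_pow_sum0[OF ch A[OF that]])
  have s1: "(\<Sum>x\<in>UNIV. Re (v x)) = 0" using s[of 1] by (simp add: Re_sum[symmetric])
  have m2: "(\<Sum>x\<in>UNIV. (Re (v x))^2) = real CARD('g) / 2" by (rule moment2[OF u s]) simp
  have m4: "(\<Sum>x\<in>UNIV. (Re (v x))^4) = 3 * real CARD('g) / 8" by (rule moment4[OF u s s]) simp_all
  have m6: "(\<Sum>x\<in>UNIV. (Re (v x))^6) = 5 * real CARD('g) / 16" by (rule moment6[OF u s s s]) simp_all
  have "Qw ch w = (\<Sum>x\<in>UNIV. pp (Re (v x)))" unfolding Qw_def v_def ..
  also have "\<dots> \<le> (\<Sum>x\<in>UNIV. Re (v x) / 2 + 11/108 + 25/36 * (Re (v x))^2 - 4/9 * (Re (v x))^4 + 4/27 * (Re (v x))^6)"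
    by (rule sum_mono) (rule maj6)
  also have "\<dots> = (\<Sum>x\<in>UNIV. Re (v x)) / 2 + 11/108 * real CARD('g) + 25/36 * (\<Sum>x\<in>UNIV. (Re (v x))^2)
       - 4/9 * (\<Sum>x\<in>UNIV. (Re (v x))^4) + 4/27 * (\<Sum>x\<in>UNIV. (Re (v x))^6)"
    by (simp add: sum.distrib sum_subtractf sum_distrib_left sum_divide_distrib)
  also have "\<dots> = 71/216 * real CARD('g)" unfolding s1 m2 m4 m6 by simp
  finally show ?thesis .
qed

lemma three_pp: "a + b + c = 0 \<Longrightarrow> \<bar>a\<bar> \<le> 1 \<Longrightarrow> \<bar>b\<bar> \<le> 1 \<Longrightarrow> \<bar>c\<bar> \<le> 1 \<Longrightarrow> pp a + pp b + pp c \<le> 1"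
  unfolding pp_def by (simp add: max_def) linarith

lemma caseB:
  fixes ch :: "'g::{ab_group_add,finite} \<Rightarrow> complex"
  assumes ch: "is_char ch" and z3: "ch g0 ^ 3 = 1" and z1: "ch g0 \<noteq> 1" and w: "cmod w = 1"
  shows "Qw ch w \<le> real CARD('g) / 3"
proof -
  define \<zeta> where "\<zeta> = ch g0"
  have zz: "1 + \<zeta> + \<zeta>^2 = 0"
  proof -
    have "(\<zeta> - 1) * (1 + \<zeta> + \<zeta>^2) = \<zeta>^3 - 1" by algebra
    then have "(\<zeta> - 1) * (1 + \<zeta> + \<zeta>^2) = 0" using z3 unfolding \<zeta>_def by simp
    then show ?thesis using z1 unfolding \<zeta>_def by simp
  qed
  define F where "F u = pp (Re (w * u))" for u
  have sh1: "(\<Sum>x\<in>UNIV. F (ch x)) = (\<Sum>x\<in>UNIV. F (\<zeta> * ch x))" unfolding \<zeta>_def by (rule char_shift[OF ch])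
  have sh2: "(\<Sum>x\<in>UNIV. F (\<zeta> * ch x)) = (\<Sum>x\<in>UNIV. F (\<zeta> * (\<zeta> * ch x)))"
    unfolding \<zeta>_def by (rule char_shift[OF ch, of "\<lambda>u. F (ch g0 * u)"])
  have "3 * Qw ch w = (\<Sum>x\<in>UNIV. F (ch x) + F (\<zeta> * ch x) + F (\<zeta> * (\<zeta> * ch x)))"
    unfolding Qw_def sum.distrib using sh1 sh2 by (simp add: F_def)
  also have "\<dots> \<le> (\<Sum>x\<in>(UNIV::'g set). (1::real))"
  proof (rule sum_mono)
    fix x
    have nz: "cmod \<zeta> = 1" unfolding \<zeta>_def by (rule is_char_norm[OF ch])
    have n1: "cmod (w * ch x) = 1" using w is_char_norm[OF ch, of x] by (simp add: norm_mult)
    have "Re (w * ch x) + Re (w * (\<zeta> * ch x)) + Re (w * (\<zeta> * (\<zeta> * ch x))) = Re (w * ch x * (1 + \<zeta> + \<zeta>^2))"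
      by (simp add: algebra_simps power2_eq_square)
    also have "\<dots> = 0" using zz by simp
    finally have sum0: "Re (w * ch x) + Re (w * (\<zeta> * ch x)) + Re (w * (\<zeta> * (\<zeta> * ch x))) = 0" .
    have b1: "\<bar>Re (w * ch x)\<bar> \<le> 1" using abs_Re_le_cmod[of "w * ch x"] n1 by simp
    have b2: "\<bar>Re (w * (\<zeta> * ch x))\<bar> \<le> 1" using abs_Re_le_cmod[of "w * (\<zeta> * ch x)"] n1 nz by (simp add: norm_mult)
    have b3: "\<bar>Re (w * (\<zeta> * (\<zeta> * ch x)))\<bar> \<le> 1" using abs_Re_le_cmod[of "w * (\<zeta> * (\<zeta> * ch x))"] n1 nz by (simp add: norm_mult)
    show "F (ch x) + F (\<zeta> * ch x) + F (\<zeta> * (\<zeta> * ch x)) \<le> 1"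
      unfolding F_def by (rule three_pp[OF sum0 b1 b2 b3])
  qed
  also have "\<dots> = real CARD('g)" by simp
  finally show ?thesis by simp
qed

lemma pp_abs: "pp a + pp (- a) = \<bar>a\<bar>" unfolding pp_def by (simp add: max_def)

lemma re_im_le: "cmod v = 1 \<Longrightarrow> \<bar>Re v\<bar> + \<bar>Im v\<bar> \<le> 3/2"
proof -
  assume v: "cmod v = 1"
  have "(Re v)\<^sup>2 + (Im v)\<^sup>2 = 1" using v by (simp add: cmod_def)
  then have "(\<bar>Re v\<bar> + \<bar>Im v\<bar>)\<^sup>2 \<le> 2"
    using sum_squares_ge_zero[of "\<bar>Re v\<bar> - \<bar>Im v\<bar>" 0] by (simp add: power2_eq_square algebra_simps)
  then have "(\<bar>Re v\<bar> + \<bar>Im v\<bar>)\<^sup>2 < (3/2)\<^sup>2" by (simp add: power2_eq_square)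
  then show ?thesis by (rule power2_less_imp_less[THEN less_imp_le]) simp
qed

lemma pos_re_4: "z ^ 4 = (1::complex) \<Longrightarrow> pp (Re z) = (1 + 2 * Re z + Re (z^2)) / 4"
proof -
  assume z: "z ^ 4 = 1"
  have "(z - 1) * (z + 1) * (z^2 + 1) = z^4 - 1" by algebra
  then have "(z - 1) * (z + 1) * (z^2 + 1) = 0" using z by simp
  then have "z - 1 = 0 \<or> z + 1 = 0 \<or> z^2 + 1 = 0" by simp
  then have "z = 1 \<or> z = -1 \<or> z^2 = -1"
  proof (elim disjE)
    assume "z - 1 = 0" then show ?thesis by simp
  next
    assume "z + 1 = 0" then have "z = -1" by (simp only: eq_neg_iff_add_eq_0) then show ?thesis by simp
  next
    assume "z^2 + 1 = 0" then have "z^2 = -1" by (simp only: eq_neg_iff_add_eq_0) then show ?thesis by simp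
  qed
  then show ?thesis
  proof (elim disjE)
    assume "z = 1" then show ?thesis by (simp add: pp_def)
  next
    assume "z = -1" then show ?thesis by (simp add: pp_def)
  next
    assume h: "z^2 = -1"
    have r2: "Re (z^2) = -1" using h by simp
    have "Re (z^2) = (Re z)^2 - (Im z)^2" "Im (z^2) = 2 * Re z * Im z" by (simp_all add: power2_eq_square)
    then have "Re z * Im z = 0" "(Re z)^2 - (Im z)^2 = -1" using h by simp_all
    then have rz: "Re z = 0"
    proof -
      assume p: "Re z * Im z = 0" and q: "(Re z)^2 - (Im z)^2 = -1"
      show "Re z = 0"
      proof (rule ccontr)
        assume "Re z \<noteq> 0"
        then have "Im z = 0" using p by simp
        then have "(Re z)^2 = -1" using q by simp
        then show False using zero_le_power2[of "Re z"] by linarith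
      qed
    qed
    then show ?thesis using r2 rz by (simp add: pp_def)
  qed
qed

lemma caseC_P:
  fixes ch :: "'g::{ab_group_add,finite} \<Rightarrow> complex"
  assumes ch: "is_char ch" and all4: "\<And>x. ch x ^ 4 = 1" and g0: "ch g0 ^ 2 \<noteq> 1"
  shows "Qw ch 1 = real CARD('g) / 4"
proof -
  have g1: "ch g0 ^ 1 \<noteq> 1" using g0 by auto
  have s1: "(\<Sum>x\<in>UNIV. (1 * ch x) ^ 1) = 0" by (rule char_pow_sum0[OF ch g1])
  have s2: "(\<Sum>x\<in>UNIV. (1 * ch x) ^ 2) = 0" by (rule char_pow_sum0[OF ch g0])
  have "Qw ch 1 = (\<Sum>x\<in>UNIV. (1 + 2 * Re (ch x) + Re ((ch x)^2)) / 4)"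
    unfolding Qw_def by (intro sum.cong refl) (simp add: pos_re_4[OF all4])
  also have "\<dots> = (real CARD('g) + 2 * Re (\<Sum>x\<in>UNIV. ch x) + Re (\<Sum>x\<in>UNIV. (ch x)^2)) / 4"
    by (simp add: sum.distrib sum_divide_distrib[symmetric] sum_distrib_left Re_sum)
  also have "\<dots> = real CARD('g) / 4" using s1 s2 by simp
  finally show ?thesis .
qed

lemma caseC_Q:
  fixes ch :: "'g::{ab_group_add,finite} \<Rightarrow> complex"
  assumes ch: "is_char ch" and all4: "\<And>x. ch x ^ 4 = 1" and g0: "ch g0 ^ 2 \<noteq> 1" and w: "cmod w = 1"
  shows "Qw ch w \<le> 3 * real CARD('g) / 8"
proof -
  define \<zeta> where "\<zeta> = ch g0"
  have "(\<zeta>^2 - 1) * (\<zeta>^2 + 1) = \<zeta>^4 - 1" by algebra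
  then have "(\<zeta>^2 - 1) * (\<zeta>^2 + 1) = 0" using all4[of g0] unfolding \<zeta>_def by simp
  then have "\<zeta>^2 + 1 = 0" using g0 unfolding \<zeta>_def by simp
  then have z2: "\<zeta>^2 = -1" by (simp only: eq_neg_iff_add_eq_0)
  have "(\<zeta> - \<i>) * (\<zeta> + \<i>) = \<zeta>^2 + 1" by (simp add: algebra_simps power2_eq_square)
  then have "(\<zeta> - \<i>) * (\<zeta> + \<i>) = 0" using z2 by simp
  then have "\<zeta> - \<i> = 0 \<or> \<zeta> + \<i> = 0" by simp
  then have zi: "\<zeta> = \<i> \<or> \<zeta> = - \<i>"
  proof
    assume "\<zeta> - \<i> = 0" then show ?thesis by simp
  next
    assume "\<zeta> + \<i> = 0" then have "\<zeta> = - \<i>" by (simp only: eq_neg_iff_add_eq_0) then show ?thesis by simp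
  qed
  define F where "F u = pp (Re (w * u))" for u
  have sh: "(\<Sum>x\<in>UNIV. G (ch x)) = (\<Sum>x\<in>UNIV. G (\<zeta> * ch x))" for G :: "complex \<Rightarrow> real"
    unfolding \<zeta>_def by (rule char_shift[OF ch])
  have a: "(\<Sum>x\<in>UNIV. F (ch x)) = (\<Sum>x\<in>UNIV. F (- ch x))"
  proof -
    have "(\<Sum>x\<in>UNIV. F (ch x)) = (\<Sum>x\<in>UNIV. F (\<zeta> * ch x))" by (rule sh)
    also have "\<dots> = (\<Sum>x\<in>UNIV. F (\<zeta> * (\<zeta> * ch x)))" by (rule sh[of "\<lambda>u. F (\<zeta> * u)"])
    also have "\<dots> = (\<Sum>x\<in>UNIV. F (- ch x))" using z2 by (simp add: mult.assoc[symmetric] power2_eq_square)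
    finally show ?thesis .
  qed
  have b: "(\<Sum>x\<in>UNIV. F (ch x)) = (\<Sum>x\<in>UNIV. F (- (\<zeta> * ch x)))"
  proof -
    have "(\<Sum>x\<in>UNIV. F (- ch x)) = (\<Sum>x\<in>UNIV. F (- (\<zeta> * ch x)))" by (rule sh[of "\<lambda>u. F (- u)"])
    then show ?thesis using a by simp
  qed
  have c: "(\<Sum>x\<in>UNIV. F (ch x)) = (\<Sum>x\<in>UNIV. F (\<zeta> * ch x))" by (rule sh)
  have "4 * Qw ch w = (\<Sum>x\<in>UNIV. (F (ch x) + F (- ch x)) + (F (\<zeta> * ch x) + F (- (\<zeta> * ch x))))"
    unfolding Qw_def sum.distrib using a b c by (simp add: F_def)
  also have "\<dots> = (\<Sum>x\<in>UNIV. \<bar>Re (w * ch x)\<bar> + \<bar>Re (w * (\<zeta> * ch x))\<bar>)"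
    unfolding F_def by (intro sum.cong refl) (simp add: pp_abs[symmetric])
  also have "\<dots> \<le> (\<Sum>x\<in>(UNIV::'g set). (3/2::real))"
  proof (rule sum_mono)
    fix x
    have n1: "cmod (w * ch x) = 1" using w is_char_norm[OF ch, of x] by (simp add: norm_mult)
    have e: "w * (\<zeta> * ch x) = \<zeta> * (w * ch x)" by (simp add: mult_ac)
    have "\<bar>Re (w * (\<zeta> * ch x))\<bar> = \<bar>Im (w * ch x)\<bar>" unfolding e using zi by (elim disjE) simp_all
    then show "\<bar>Re (w * ch x)\<bar> + \<bar>Re (w * (\<zeta> * ch x))\<bar> \<le> 3/2" using re_im_le[OF n1] by simp
  qed
  also have "\<dots> = 3/2 * real CARD('g)" by simp
  finally show ?thesis by simp
qed

lemma pos_re_5: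
  assumes z: "z ^ 5 = (1::complex)"
  shows "pp (Re z) \<le> 407/1250 + 1193/2500 * Re z + 493/2500 * Re (z^2)"
proof (cases "z = 1")
  case True then show ?thesis by (simp add: pp_def)
next
  case False
  define y where "y = Re z"
  have "cmod z ^ 5 = 1" using z by (metis norm_one norm_power)
  then have "cmod z ^ 5 = 1 ^ 5" by simp
  then have nz: "cmod z = 1" by (rule power_eq_imp_eq_base) auto
  have cz: "cnj z * z = 1" using complex_norm_square[of z] nz by (simp add: mult.commute)
  have "(z - 1) * (z^4 + z^3 + z^2 + z + 1) = z^5 - 1" by algebra
  then have "(z - 1) * (z^4 + z^3 + z^2 + z + 1) = 0" using z by simp
  then have q: "z^4 + z^3 + z^2 + z + 1 = 0" using False by simp
  have "z^2 + z + 1 + cnj z + cnj z^2 = cnj z^2 * (z^4 + z^3 + z^2 + z + 1)" using cz by algebra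
  then have "z^2 + z + 1 + cnj z + cnj z^2 = 0" using q by simp
  then have "Re (z^2 + z + 1 + cnj z + cnj z^2) = 0" by simp
  then have r1: "2 * Re (z^2) + 2 * y + 1 = 0" unfolding y_def by (simp add: power2_eq_square)
  have "(Re z)^2 + (Im z)^2 = 1" using nz by (simp add: cmod_def)
  then have r2: "Re (z^2) = 2 * y^2 - 1" unfolding y_def by (simp add: power2_eq_square algebra_simps)
  have f: "4 * y^2 + 2 * y - 1 = 0" using r1 r2 by simp
  have rhs: "407/1250 + 1193/2500 * Re z + 493/2500 * Re (z^2) = 227/1000 + 7/25 * y"
    using r2 f unfolding y_def[symmetric] by (simp add: algebra_simps)
  have fin: "pp y \<le> 227/1000 + 7/25 * y"
  proof (cases "y \<ge> 0")
    case True
    have "y \<le> 227/720"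
    proof (rule ccontr)
      assume "\<not> y \<le> 227/720"
      then have yg: "y > 227/720" by simp
      have "y * y > (227/720) * (227/720)" using yg by (intro mult_strict_mono) auto
      then show False using f yg by (simp add: power2_eq_square)
    qed
    then show "pp y \<le> 227/1000 + 7/25 * y" using True by (simp add: pp_def)
  next
    case False
    have "y \<ge> -227/280"
    proof (rule ccontr)
      assume "\<not> y \<ge> -227/280"
      then have yl: "y < -227/280" by simp
      have "(y - (-227/280)) * (4 * y + 4 * (-227/280) + 2) > 0" using yl by (intro mult_neg_neg) auto
      moreover have "4 * y^2 + 2 * y - 1 = (y - (-227/280)) * (4 * y + 4 * (-227/280) + 2) + (4 * (-227/280)^2 + 2 * (-227/280) - 1)"
        by (simp add: power2_eq_square algebra_simps)
      moreover have num: "4 * (-227/280::real)^2 + 2 * (-227/280) - 1 > 0" by (simp add: power2_eq_square)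
      ultimately show False using f by linarith
    qed
    then show "pp y \<le> 227/1000 + 7/25 * y" using False by (simp add: pp_def)
  qed
  then show ?thesis using rhs unfolding y_def by simp
qed

lemma five_pow_ne:
  fixes \<zeta> :: complex
  assumes z5: "\<zeta> ^ 5 = 1" and z1: "\<zeta> \<noteq> 1"
  shows "\<zeta> ^ 2 \<noteq> 1" "\<zeta> ^ 4 \<noteq> 1"
proof -
  show "\<zeta> ^ 2 \<noteq> 1"
  proof
    assume h: "\<zeta>^2 = 1"
    have "\<zeta>^5 = \<zeta> * (\<zeta>^2)^2" by algebra
    then show False using h z5 z1 by simp
  qed
  show "\<zeta> ^ 4 \<noteq> 1"
  proof
    assume h: "\<zeta>^4 = 1"
    have "\<zeta>^5 = \<zeta> * \<zeta>^4" by algebra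
    then show False using h z5 z1 by simp
  qed
qed

lemma caseD_P:
  fixes ch :: "'g::{ab_group_add,finite} \<Rightarrow> complex"
  assumes ch: "is_char ch" and all5: "\<And>x. ch x ^ 5 = 1" and g0: "ch g0 \<noteq> 1"
  shows "Qw ch 1 \<le> 407/1250 * real CARD('g)"
proof -
  have g1: "ch g0 ^ 1 \<noteq> 1" using g0 by simp
  have g2: "ch g0 ^ 2 \<noteq> 1" by (rule five_pow_ne(1)[OF all5 g0])
  have s1: "(\<Sum>x\<in>UNIV. (1 * ch x) ^ 1) = 0" by (rule char_pow_sum0[OF ch g1])
  have s2: "(\<Sum>x\<in>UNIV. (1 * ch x) ^ 2) = 0" by (rule char_pow_sum0[OF ch g2])
  have "Qw ch 1 \<le> (\<Sum>x\<in>UNIV. 407/1250 + 1193/2500 * Re (ch x) + 493/2500 * Re ((ch x)^2))"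
    unfolding Qw_def by (rule sum_mono) (simp only: mult_1, rule pos_re_5[OF all5])
  also have "\<dots> = 407/1250 * real CARD('g) + 1193/2500 * Re (\<Sum>x\<in>UNIV. ch x) + 493/2500 * Re (\<Sum>x\<in>UNIV. (ch x)^2)"
    by (simp add: sum.distrib sum_distrib_left Re_sum)
  also have "\<dots> = 407/1250 * real CARD('g)" using s1 s2 by simp
  finally show ?thesis .
qed

lemma caseD_Q:
  fixes ch :: "'g::{ab_group_add,finite} \<Rightarrow> complex"
  assumes ch: "is_char ch" and all5: "\<And>x. ch x ^ 5 = 1" and g0: "ch g0 \<noteq> 1" and w: "cmod w = 1"
  shows "Qw ch w \<le> 129/384 * real CARD('g)"
proof -
  define v where "v x = w * ch x" for x
  have u: "cnj (v x) * v x = 1" for x unfolding v_def by (rule unit_mult[OF w ch])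
  have g1: "ch g0 ^ 1 \<noteq> 1" using g0 by simp
  have s1': "(\<Sum>x\<in>UNIV. v x ^ 1) = 0" unfolding v_def by (rule char_pow_sum0[OF ch g1])
  have s2: "(\<Sum>x\<in>UNIV. v x ^ 2) = 0" unfolding v_def by (rule char_pow_sum0[OF ch five_pow_ne(1)[OF all5 g0]])
  have s4: "(\<Sum>x\<in>UNIV. v x ^ 4) = 0" unfolding v_def by (rule char_pow_sum0[OF ch five_pow_ne(2)[OF all5 g0]])
  have s1: "(\<Sum>x\<in>UNIV. Re (v x)) = 0" using s1' by (simp add: Re_sum[symmetric])
  have m2: "(\<Sum>x\<in>UNIV. (Re (v x))^2) = real CARD('g) / 2" by (rule moment2[OF u s2])
  have m4: "(\<Sum>x\<in>UNIV. (Re (v x))^4) = 3 * real CARD('g) / 8" by (rule moment4[OF u s2 s4])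
  have "Qw ch w = (\<Sum>x\<in>UNIV. pp (Re (v x)))" unfolding Qw_def v_def ..
  also have "\<dots> \<le> (\<Sum>x\<in>UNIV. Re (v x) / 2 + 43/384 + 29/48 * (Re (v x))^2 - 5/24 * (Re (v x))^4)"
    by (rule sum_mono) (rule maj4[OF re_abs_le1[OF u]])
  also have "\<dots> = (\<Sum>x\<in>UNIV. Re (v x)) / 2 + 43/384 * real CARD('g) + 29/48 * (\<Sum>x\<in>UNIV. (Re (v x))^2)
       - 5/24 * (\<Sum>x\<in>UNIV. (Re (v x))^4)"
    by (simp add: sum.distrib sum_subtractf sum_distrib_left sum_divide_distrib)
  also have "\<dots> = 129/384 * real CARD('g)" unfolding s1 m2 m4 by simp
  finally show ?thesis .
qed

lemma orders:
  fixes z :: complex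
  assumes j: "j \<in> {1,2,3,4,5,6::nat}" "z^j = 1" and nB: "\<not>(z^3 = 1 \<and> z \<noteq> 1)"
    and nB': "\<not>(z^6 = 1 \<and> z^2 \<noteq> 1 \<and> z^3 \<noteq> 1)"
  shows "z^4 = 1 \<or> z^5 = 1"
proof -
  have e1: "z^4 = (z^2)^2" by algebra
  have e2: "z^6 = (z^3)^2" by algebra
  show ?thesis
  proof (cases "z^2 = 1 \<or> z = 1")
    case True
    then show ?thesis
    proof
      assume "z^2 = 1" then show ?thesis by (metis e1 one_power2)
    next
      assume "z = 1" then show ?thesis by simp
    qed
  next
    case False
    then have z21: "z^2 \<noteq> 1" "z \<noteq> 1" by auto
    then have z3: "z^3 \<noteq> 1" using nB by blast
    have z6: "z^6 \<noteq> 1" using nB' z21 z3 by blast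
    from j z21 z3 z6 show ?thesis by auto
  qed
qed

lemma mix:
  fixes a b :: complex
  assumes a5: "a^5 = 1" and a4: "a^4 \<noteq> 1" and b4: "b^4 = 1" and b5: "b^5 \<noteq> 1" and j: "j \<in> {1,2,3,4,5,6::nat}"
  shows "(a * b)^j \<noteq> 1"
proof
  assume h: "(a * b)^j = 1"
  have a0: "a \<noteq> 0" using a5 by auto
  have p1: "(a * b)^(j * 4) = ((a * b)^j)^4" by (simp add: power_mult)
  have p2: "(a * b)^(j * 4) = a^(j * 4) * b^(j * 4)" by (simp add: power_mult_distrib)
  have p3: "b^(j * 4) = (b^4)^j" by (simp add: power_mult[symmetric] mult.commute)
  have a4j: "a^(j * 4) = 1" using p1 p2 p3 h b4 by simp
  have "a^(j * 5) = (a^5)^j" by (metis mult.commute power_mult)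
  then have a5j: "a^(j * 5) = 1" using a5 by simp
  have j5: "j * 5 = j + j * 4" by simp
  have "a^(j * 5) = a^j * a^(j * 4)" by (simp only: j5 power_add)
  then have aj: "a^j = 1" using a4j a5j by simp
  have bj: "b^j = 1" using h aj by (simp add: power_mult_distrib)
  have a1: "a \<noteq> 1" using a4 by auto
  consider "j = 1" | "j = 2" | "j = 3" | "j = 4" | "j = 5" | "j = 6" using j by auto
  then show False
  proof cases
    case 1 then show ?thesis using aj a1 by simp
  next
    case 2
    have e: "a^5 = a * (a^2)^2" by algebra
    have a2: "a^2 = 1" using aj 2 by simp
    have "a^5 = a" by (simp only: e a2 power_one mult_1_right)
    then show ?thesis using a5 a1 by simp
  next
    case 3
    have e: "a^5 * a = (a^3)^2" by algebra
    have a3: "a^3 = 1" using aj 3 by simp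
    have "a^5 * a = 1" by (simp only: e a3 power_one)
    then show ?thesis using a5 a1 by simp
  next
    case 4
    have e: "a^5 = a^4 * a" by algebra
    have a4': "a^4 = 1" using aj 4 by simp
    have "a^5 = a" by (simp only: e a4' mult_1_left)
    then show ?thesis using a5 a1 by simp
  next
    case 5 then show ?thesis using bj b5 by simp
  next
    case 6
    have e: "a^6 = a^5 * a" by algebra
    have a6: "a^6 = 1" using aj 6 by simp
    have "1 = a" using e by (simp only: a6 a5 mult_1_left)
    then show ?thesis using a1 by simp
  qed
qed

lemma key_nonreal:
  fixes ch :: "'g::{ab_group_add,finite} \<Rightarrow> complex"
  assumes ch: "is_char ch" and nr: "\<exists>x. ch x ^ 2 \<noteq> 1" and w: "cmod w = 1"
  shows "Qw ch 1 + Qw ch w \<le> 2 * real CARD('g) / 3"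
proof -
  define n where "n = real CARD('g)"
  have w1: "cmod (1::complex) = 1" by simp
  show ?thesis
  proof (cases "\<exists>g0. \<forall>j\<in>{1,2,3,4,5,6::nat}. ch g0 ^ j \<noteq> 1")
    case True
    then obtain g0 where g0: "\<And>j. j \<in> {1,2,3,4,5,6} \<Longrightarrow> ch g0 ^ j \<noteq> 1" by blast
    have "Qw ch 1 \<le> 71/216 * n" unfolding n_def by (rule caseA[OF ch g0 w1])
    moreover have "Qw ch w \<le> 71/216 * n" unfolding n_def by (rule caseA[OF ch g0 w])
    ultimately show ?thesis unfolding n_def by simp
  next
    case nA: False
    then have nA': "\<exists>j\<in>{1,2,3,4,5,6::nat}. ch x ^ j = 1" for x by blast
    show ?thesis
    proof (cases "\<exists>g0. ch g0 ^ 3 = 1 \<and> ch g0 \<noteq> 1")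
      case True
      then obtain g0 where g: "ch g0 ^ 3 = 1" "ch g0 \<noteq> 1" by blast
      have "Qw ch 1 \<le> n / 3" unfolding n_def by (rule caseB[OF ch g w1])
      moreover have "Qw ch w \<le> n / 3" unfolding n_def by (rule caseB[OF ch g w])
      ultimately show ?thesis unfolding n_def by simp
    next
      case nB: False
      show ?thesis
      proof (cases "\<exists>g0. ch g0 ^ 6 = 1 \<and> ch g0 ^ 2 \<noteq> 1 \<and> ch g0 ^ 3 \<noteq> 1")
        case True
        then obtain g0 where g: "ch g0 ^ 6 = 1" "ch g0 ^ 2 \<noteq> 1" "ch g0 ^ 3 \<noteq> 1" by blast
        have e: "ch (g0 + g0) = ch g0 ^ 2" by (simp add: is_char_add[OF ch] power2_eq_square)
        have "ch (g0 + g0) ^ 3 = 1" unfolding e using g(1) by (simp add: power_mult[symmetric])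
        moreover have "ch (g0 + g0) \<noteq> 1" unfolding e using g(2) .
        ultimately show ?thesis using nB by blast
      next
        case nB': False
        have o: "ch x ^ 4 = 1 \<or> ch x ^ 5 = 1" for x
        proof -
          obtain j where "j \<in> {1,2,3,4,5,6::nat}" "ch x ^ j = 1" using nA' by blast
          then show ?thesis using orders[of j "ch x"] nB nB' by blast
        qed
        show ?thesis
        proof (cases "\<forall>x. ch x ^ 4 = 1")
          case True
          obtain g0 where g0: "ch g0 ^ 2 \<noteq> 1" using nr by blast
          have "Qw ch 1 = n / 4" unfolding n_def by (rule caseC_P[OF ch _ g0]) (use True in blast)
          moreover have "Qw ch w \<le> 3 * n / 8" unfolding n_def by (rule caseC_Q[OF ch _ g0 w]) (use True in blast)
          ultimately show ?thesis unfolding n_def by simp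
        next
          case False
          then obtain x1 where x1: "ch x1 ^ 4 \<noteq> 1" by blast
          then have x15: "ch x1 ^ 5 = 1" using o by blast
          show ?thesis
          proof (cases "\<forall>x. ch x ^ 5 = 1")
            case True
            have g0: "ch x1 \<noteq> 1" using x1 by auto
            have "Qw ch 1 \<le> 407/1250 * n" unfolding n_def by (rule caseD_P[OF ch _ g0]) (use True in blast)
            moreover have "Qw ch w \<le> 129/384 * n" unfolding n_def by (rule caseD_Q[OF ch _ g0 w]) (use True in blast)
            ultimately show ?thesis unfolding n_def by simp
          next
            case False
            then obtain x2 where x2: "ch x2 ^ 5 \<noteq> 1" by blast
            then have x24: "ch x2 ^ 4 = 1" using o by blast
            have "\<forall>j\<in>{1,2,3,4,5,6::nat}. ch (x1 + x2) ^ j \<noteq> 1"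
              using mix[OF x15 x1 x24 x2] by (simp add: is_char_add[OF ch])
            then show ?thesis using nA by blast
          qed
        qed
      qed
    qed
  qed
qed

lemma rr_le_P:
  fixes ch :: "'g::{ab_group_add,finite} \<Rightarrow> complex"
  shows "Re (w * (\<Sum>x\<in>X. ch x)) \<le> Qw ch w"
proof -
  have "Re (w * (\<Sum>x\<in>X. ch x)) = (\<Sum>x\<in>X. Re (w * ch x))" by (simp add: sum_distrib_left Re_sum)
  also have "\<dots> \<le> (\<Sum>x\<in>X. pp (Re (w * ch x)))" by (rule sum_mono) (rule pp_ge)
  also have "\<dots> \<le> (\<Sum>x\<in>UNIV. pp (Re (w * ch x)))" by (rule sum_mono2) (auto simp: pp_ge)
  finally show ?thesis unfolding Qw_def .
qed

lemma nonreal_noeig: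
  fixes ch :: "'g::{ab_group_add,finite} \<Rightarrow> complex"
  assumes ch: "is_char ch" and nr: "\<exists>x. ch x ^ 2 \<noteq> 1"
    and root: "(d - rr R ch) * (d - rr S ch) = (cmod (\<Sum>x\<in>T. ch x))\<^sup>2"
    and gt: "d > 2 * real CARD('g) / 3"
  shows False
proof -
  define t where "t = (\<Sum>x\<in>T. ch x)"
  define w where "w = (if t = 0 then 1 else cnj t / complex_of_real (cmod t))"
  have w1: "cmod w = 1" unfolding w_def by (simp add: norm_divide)
  have wt: "Re (w * t) = cmod t"
  proof (cases "t = 0")
    case True then show ?thesis unfolding w_def by simp
  next
    case False
    have "w * t = complex_of_real ((cmod t)\<^sup>2) / complex_of_real (cmod t)"
      unfolding w_def using False complex_norm_square[of t] by (simp add: mult.commute)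
    also have "\<dots> = complex_of_real (cmod t)" using False by (simp add: power2_eq_square)
    finally show ?thesis by simp
  qed
  have key: "Qw ch 1 + Qw ch w \<le> 2 * real CARD('g) / 3" by (rule key_nonreal[OF ch nr w1])
  have rR: "rr R ch \<le> Qw ch 1" using rr_le_P[where w=1 and X=R and ch=ch] unfolding rr_def by simp
  have rS: "rr S ch \<le> Qw ch 1" using rr_le_P[where w=1 and X=S and ch=ch] unfolding rr_def by simp
  have tQ: "cmod t \<le> Qw ch w" using rr_le_P[where w=w and X=T and ch=ch] wt unfolding t_def by simp
  have a: "cmod t < d - rr R ch" using key rR tQ gt by linarith
  have b: "cmod t < d - rr S ch" using key rS tQ gt by linarith
  have "cmod t * cmod t < (d - rr R ch) * (d - rr S ch)"
  proof -
    have c0: "0 \<le> cmod t" by simp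
    show ?thesis by (rule mult_strict_mono[OF a b]) (insert a c0, linarith)+
  qed
  then show False using root unfolding t_def by (simp add: power2_eq_square)
qed

lemma real_vals:
  fixes z :: complex
  assumes "z^2 = 1"
  shows "z = complex_of_real (Re z) \<and> (Re z = 1 \<or> Re z = -1)"
proof -
  have "(z - 1) * (z + 1) = z^2 - 1" by (simp add: algebra_simps power2_eq_square)
  then have "(z - 1) * (z + 1) = 0" using assms by simp
  then have "z - 1 = 0 \<or> z + 1 = 0" by simp
  then have "z = 1 \<or> z = -1"
  proof
    assume "z - 1 = 0" then show ?thesis by simp
  next
    assume "z + 1 = 0" then have "z = -1" by (simp only: eq_neg_iff_add_eq_0) then show ?thesis by simp
  qed
  then show ?thesis by auto
qed

lemma klein_sum:
  fixes ch1 ch2 :: "'g::{ab_group_add,finite} \<Rightarrow> complex"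
  assumes c1: "is_char ch1" and c2: "is_char ch2" and re1: "\<And>x. ch1 x ^ 2 = 1" and re2: "\<And>x. ch2 x ^ 2 = 1"
    and nt1: "ch1 \<noteq> (\<lambda>_. 1)" and nt2: "ch2 \<noteq> (\<lambda>_. 1)" and ne: "ch1 \<noteq> ch2"
    and e1: "e1 = 1 \<or> e1 = -1" and e2: "e2 = 1 \<or> e2 = -1"
  shows "e1 * rr X ch1 + e2 * rr X ch2 \<le> real CARD('g) / 2"
proof -
  define \<rho>1 where "\<rho>1 x = Re (ch1 x)" for x
  define \<rho>2 where "\<rho>2 x = Re (ch2 x)" for x
  have v1: "ch1 x = complex_of_real (\<rho>1 x)" "\<rho>1 x = 1 \<or> \<rho>1 x = -1" for x
    using real_vals[OF re1[of x]] unfolding \<rho>1_def by auto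
  have v2: "ch2 x = complex_of_real (\<rho>2 x)" "\<rho>2 x = 1 \<or> \<rho>2 x = -1" for x
    using real_vals[OF re2[of x]] unfolding \<rho>2_def by auto
  have s1: "(\<Sum>x\<in>UNIV. \<rho>1 x) = 0" using sum_char'[OF c1 nt1] unfolding \<rho>1_def by (simp add: Re_sum[symmetric])
  have s2: "(\<Sum>x\<in>UNIV. \<rho>2 x) = 0" using sum_char'[OF c2 nt2] unfolding \<rho>2_def by (simp add: Re_sum[symmetric])
  have nt12: "(\<lambda>x. ch1 x * ch2 x) \<noteq> (\<lambda>_. 1)"
  proof
    assume h: "(\<lambda>x. ch1 x * ch2 x) = (\<lambda>_. 1)"
    have "ch1 x = ch2 x" for x
    proof -
      have "ch1 x * ch2 x = 1" using h by metis
      then have "ch1 x * (ch1 x * ch2 x) = ch1 x" by simp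
      then have "ch1 x ^ 2 * ch2 x = ch1 x" by (simp add: power2_eq_square mult.assoc)
      then show ?thesis using re1[of x] by simp
    qed
    then show False using ne by auto
  qed
  have s12: "(\<Sum>x\<in>UNIV. \<rho>1 x * \<rho>2 x) = 0"
  proof -
    have "(\<Sum>x\<in>UNIV. ch1 x * ch2 x) = 0" by (rule sum_char'[OF is_char_mult[OF c1 c2] nt12])
    then have "Re (\<Sum>x\<in>UNIV. ch1 x * ch2 x) = 0" by simp
    moreover have "Re (\<Sum>x\<in>UNIV. ch1 x * ch2 x) = (\<Sum>x\<in>UNIV. \<rho>1 x * \<rho>2 x)"
      unfolding Re_sum by (intro sum.cong refl) (simp add: v1(1) v2(1))
    ultimately show ?thesis by simp
  qed
  have "e1 * rr X ch1 + e2 * rr X ch2 = (\<Sum>x\<in>X. e1 * \<rho>1 x + e2 * \<rho>2 x)"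
    unfolding rr_def \<rho>1_def \<rho>2_def by (simp add: Re_sum sum.distrib sum_distrib_left)
  also have "\<dots> = (\<Sum>x\<in>UNIV. if x \<in> X then e1 * \<rho>1 x + e2 * \<rho>2 x else 0)"
    by (rule sum_if_UNIV[symmetric])
  also have "\<dots> \<le> (\<Sum>x\<in>UNIV. (1 + e1 * \<rho>1 x) * (1 + e2 * \<rho>2 x) / 2)"
  proof (rule sum_mono)
    fix x
    show "(if x \<in> X then e1 * \<rho>1 x + e2 * \<rho>2 x else 0) \<le> (1 + e1 * \<rho>1 x) * (1 + e2 * \<rho>2 x) / 2"
      using e1 e2 v1(2)[of x] v2(2)[of x] by (elim disjE) auto
  qed
  also have "\<dots> = (\<Sum>x\<in>UNIV. 1/2 + e1/2 * \<rho>1 x + e2/2 * \<rho>2 x + e1*e2/2 * (\<rho>1 x * \<rho>2 x))"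
    by (intro sum.cong refl) (simp add: field_simps)
  also have "\<dots> = real CARD('g) / 2 + e1/2 * (\<Sum>x\<in>UNIV. \<rho>1 x) + e2/2 * (\<Sum>x\<in>UNIV. \<rho>2 x) + e1*e2/2 * (\<Sum>x\<in>UNIV. \<rho>1 x * \<rho>2 x)"
    by (simp add: sum.distrib sum_distrib_left)
  also have "\<dots> = real CARD('g) / 2" using s1 s2 s12 by simp
  finally show ?thesis .
qed

lemma klein_arith:
  fixes m r1 r2 s1 s2 T1 T2 d1 d2 :: real
  assumes m: "m > 0" and r: "r1 \<le> 3 * m" "r2 \<le> 3 * m" "s1 \<le> 3 * m" "s2 \<le> 3 * m"
    and rs: "r1 + r2 \<le> 3 * m" "s1 + s2 \<le> 3 * m"
    and T: "T1 \<ge> 0" "T2 \<ge> 0" "T1 + T2 \<le> 3 * m"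
    and d: "d1 > 4 * m" "d2 > 4 * m"
    and root: "(d1 - r1) * (d1 - s1) = T1\<^sup>2" "(d2 - r2) * (d2 - s2) = T2\<^sup>2"
  shows False
proof -
  define u1 where "u1 = 4 * m - r1"
  define v1 where "v1 = 4 * m - s1"
  define u2 where "u2 = 4 * m - r2"
  define v2 where "v2 = 4 * m - s2"
  have uv: "u1 \<ge> m" "v1 \<ge> m" "u2 \<ge> m" "v2 \<ge> m" using r unfolding u1_def v1_def u2_def v2_def by simp_all
  have t1: "T1\<^sup>2 > u1 * v1"
  proof -
    have "u1 * v1 < (d1 - r1) * (d1 - s1)"
      using d uv m unfolding u1_def v1_def by (intro mult_strict_mono) auto
    then show ?thesis using root by simp
  qed
  have t2: "T2\<^sup>2 > u2 * v2"
  proof -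
    have "u2 * v2 < (d2 - r2) * (d2 - s2)"
      using d uv m unfolding u2_def v2_def by (intro mult_strict_mono) auto
    then show ?thesis using root by simp
  qed
  define P1 where "P1 = u1 + v1 - m"
  define P2 where "P2 = u2 + v2 - m"
  have q1: "u1 * v1 \<ge> m * P1"
  proof -
    have "(u1 - m) * (v1 - m) \<ge> 0" using uv by simp
    then show ?thesis unfolding P1_def by (simp add: algebra_simps)
  qed
  have q2: "u2 * v2 \<ge> m * P2"
  proof -
    have "(u2 - m) * (v2 - m) \<ge> 0" using uv by simp
    then show ?thesis unfolding P2_def by (simp add: algebra_simps)
  qed
  have P: "P1 \<ge> m" "P2 \<ge> m" "P1 + P2 \<ge> 8 * m" using uv rs unfolding P1_def P2_def u1_def v1_def u2_def v2_def by simp_all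
  have T1P: "T1\<^sup>2 > m * P1" using t1 q1 by simp
  have T2P: "T2\<^sup>2 > m * P2" using t2 q2 by simp
  have PP: "P1 * P2 \<ge> m * (P1 + P2 - m)"
  proof -
    have "(P1 - m) * (P2 - m) \<ge> 0" using P by simp
    then show ?thesis by (simp add: algebra_simps)
  qed
  have "m * (P1 + P2 - m) \<ge> m * (7 * m)" using P m by (intro mult_left_mono) auto
  then have P12: "P1 * P2 \<ge> 7 * (m * m)" using PP by simp
  have "(m * P1) * (m * P2) = (m * m) * (P1 * P2)" by (simp add: mult_ac)
  also have "\<dots> \<ge> (m * m) * (7 * (m * m))" using P12 by (intro mult_left_mono) auto
  finally have mm: "(m * P1) * (m * P2) \<ge> 7 * ((m * m) * (m * m))" by simp
  have mP2: "0 \<le> m * P2" using m P by simp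
  have T1pos: "0 < T1\<^sup>2" using T1P m P by (smt (verit) mult_pos_pos)
  have "(m * P1) * (m * P2) < T1\<^sup>2 * T2\<^sup>2"
    using T1P T2P T1pos mP2 by (intro mult_strict_mono) auto
  then have "T1\<^sup>2 * T2\<^sup>2 > 4 * ((m * m) * (m * m))" using mm m by (smt (verit) mult_pos_pos)
  moreover have "(T1 * T2)\<^sup>2 = T1\<^sup>2 * T2\<^sup>2" "(2 * (m * m))\<^sup>2 = 4 * ((m * m) * (m * m))"
    by (simp_all add: power_mult_distrib power2_eq_square)
  ultimately have "(T1 * T2)\<^sup>2 > (2 * (m * m))\<^sup>2" by linarith
  moreover have nn: "0 \<le> T1 * T2" using T by simp
  ultimately have TT: "T1 * T2 > 2 * (m * m)" by (rule power2_less_imp_less)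
  have "(T1 + T2)\<^sup>2 = T1\<^sup>2 + T2\<^sup>2 + 2 * (T1 * T2)" by (simp add: power2_eq_square algebra_simps)
  also have "\<dots> > m * P1 + m * P2 + 4 * (m * m)" using T1P T2P TT by simp
  finally have "(T1 + T2)\<^sup>2 > m * (P1 + P2) + 4 * (m * m)" by (simp add: algebra_simps)
  moreover have "m * (P1 + P2) \<ge> m * (8 * m)" using P m by (intro mult_left_mono) auto
  moreover have "(T1 + T2)\<^sup>2 \<le> (3 * m)\<^sup>2" using T by (intro power_mono) auto
  moreover have "m * (8 * m) = 8 * (m * m)" "(3 * m)\<^sup>2 = 9 * (m * m)" by (simp_all add: power2_eq_square)
  moreover have "m * m > 0" using m by simp
  ultimately show False by linarith
qed

lemma real_sum_of_real:
  fixes ch :: "'g::{ab_group_add,finite} \<Rightarrow> complex"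
  assumes re: "\<And>x. ch x ^ 2 = 1"
  shows "(\<Sum>x\<in>X. ch x) = complex_of_real (rr X ch)"
proof -
  have "Im (ch x) = 0" for x using real_vals[OF re[of x]] by (metis Im_complex_of_real)
  then have "Im (\<Sum>x\<in>X. ch x) = 0" by (simp add: Im_sum)
  then show ?thesis unfolding rr_def by (simp add: complex_eq_iff)
qed

lemma case_iv:
  fixes ch1 ch2 :: "'g::{ab_group_add,finite} \<Rightarrow> complex"
  assumes c1: "is_char ch1" and c2: "is_char ch2" and re1: "\<And>x. ch1 x ^ 2 = 1" and re2: "\<And>x. ch2 x ^ 2 = 1"
    and nt1: "ch1 \<noteq> (\<lambda>_. 1)" and nt2: "ch2 \<noteq> (\<lambda>_. 1)" and ne: "ch1 \<noteq> ch2"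
    and root1: "(d1 - rr R ch1) * (d1 - rr S ch1) = (cmod (\<Sum>x\<in>T. ch1 x))\<^sup>2" and gt1: "d1 > 2 * real CARD('g) / 3"
    and root2: "(d2 - rr R ch2) * (d2 - rr S ch2) = (cmod (\<Sum>x\<in>T. ch2 x))\<^sup>2" and gt2: "d2 > 2 * real CARD('g) / 3"
  shows False
proof -
  define n where "n = real CARD('g)"
  define m where "m = n / 6"
  have m0: "m > 0" unfolding m_def n_def by simp
  have half: "rr X ch \<le> 3 * m" if "is_char ch" "ch \<noteq> (\<lambda>_. 1)" for X and ch :: "'g \<Rightarrow> complex"
    using rr_le_card[OF that(1), of X] rr_le_compl[OF that, of X] unfolding m_def n_def by linarith
  have ks: "e1 * rr X ch1 + e2 * rr X ch2 \<le> 3 * m" if "e1 = 1 \<or> e1 = -1" "e2 = 1 \<or> e2 = -1" for X e1 e2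
    using klein_sum[OF c1 c2 re1 re2 nt1 nt2 ne that] unfolding m_def n_def by simp
  have rs: "rr R ch1 + rr R ch2 \<le> 3 * m" "rr S ch1 + rr S ch2 \<le> 3 * m" using ks[of 1 1] by simp_all
  define T1 where "T1 = cmod (\<Sum>x\<in>T. ch1 x)"
  define T2 where "T2 = cmod (\<Sum>x\<in>T. ch2 x)"
  have T1e: "T1 = \<bar>rr T ch1\<bar>" unfolding T1_def real_sum_of_real[OF re1] by simp
  have T2e: "T2 = \<bar>rr T ch2\<bar>" unfolding T2_def real_sum_of_real[OF re2] by simp
  define e1 :: real where "e1 = (if rr T ch1 \<ge> 0 then 1 else -1)"
  define e2 :: real where "e2 = (if rr T ch2 \<ge> 0 then 1 else -1)"
  have "e1 * rr T ch1 + e2 * rr T ch2 \<le> 3 * m" by (rule ks) (auto simp: e1_def e2_def)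
  moreover have "e1 * rr T ch1 = T1" "e2 * rr T ch2 = T2" unfolding T1e T2e e1_def e2_def by auto
  ultimately have TT: "T1 + T2 \<le> 3 * m" by simp
  have d4: "d1 > 4 * m" "d2 > 4 * m" using gt1 gt2 unfolding m_def n_def by simp_all
  have r1': "(d1 - rr R ch1) * (d1 - rr S ch1) = T1\<^sup>2" using root1 unfolding T1_def .
  have r2': "(d2 - rr R ch2) * (d2 - rr S ch2) = T2\<^sup>2" using root2 unfolding T2_def .
  have T0: "T1 \<ge> 0" "T2 \<ge> 0" unfolding T1_def T2_def by simp_all
  show False
    by (rule klein_arith[OF m0 half[OF c1 nt1] half[OF c2 nt2] half[OF c1 nt1] half[OF c2 nt2] rs T0 TT d4 r1' r2'])
qed

lemma count2:
  fixes D :: "'a::finite \<Rightarrow> bool \<Rightarrow> real"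
  assumes i: "\<And>y. y \<noteq> y0 \<Longrightarrow> \<not> (D y False > c \<and> D y True > c)"
    and ii: "\<And>y i. D y0 False > c \<Longrightarrow> D y0 True > c \<Longrightarrow> y \<noteq> y0 \<Longrightarrow> \<not> D y i > c"
    and iv: "\<And>y y' i i'. y \<noteq> y0 \<Longrightarrow> y' \<noteq> y0 \<Longrightarrow> y \<noteq> y' \<Longrightarrow> D y i > c \<Longrightarrow> D y' i' > c \<Longrightarrow> False"
  shows "card {u. D (fst u) (snd u) > c} \<le> 2"
proof -
  define S where "S = {u. D (fst u) (snd u) > c}"
  have bool2: "i = False \<or> i = True" for i :: bool by auto
  show ?thesis
  proof (cases "D y0 False > c \<and> D y0 True > c")
    case True
    have "S \<subseteq> {(y0, False), (y0, True)}"
    proof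
      fix u assume u: "u \<in> S"
      obtain y i where ui: "u = (y, i)" by (cases u)
      have "y = y0" using ii[of y i] True u ui unfolding S_def by auto
      then show "u \<in> {(y0, False), (y0, True)}" using ui bool2[of i] by auto
    qed
    then have "card S \<le> card {(y0, False), (y0, True)}" by (intro card_mono) auto
    also have "\<dots> \<le> 2" by (simp add: card_insert_if)
    finally show ?thesis unfolding S_def .
  next
    case False
    define A where "A = {u \<in> S. fst u = y0}"
    define B where "B = {u \<in> S. fst u \<noteq> y0}"
    have SAB: "S = A \<union> B" unfolding A_def B_def by auto
    have cA: "card A \<le> 1"
    proof -
      have "\<forall>a1\<in>A. \<forall>a2\<in>A. a1 = a2"
      proof (intro ballI)
        fix a1 a2 assume a1: "a1 \<in> A" and a2: "a2 \<in> A"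
        obtain y i where p1: "a1 = (y, i)" by (cases a1)
        obtain y' i' where p2: "a2 = (y', i')" by (cases a2)
        have yy: "y = y0" "y' = y0" using a1 a2 p1 p2 unfolding A_def by auto
        have g: "D y0 i > c" "D y0 i' > c" using a1 a2 p1 p2 yy unfolding A_def S_def by auto
        have "i = i'"
        proof (rule ccontr)
          assume "i \<noteq> i'"
          then have "{i, i'} = {False, True}" using bool2[of i] bool2[of i'] by auto
          then have "D y0 False > c \<and> D y0 True > c" using g by (cases i) auto
          then show False using False by simp
        qed
        then show "a1 = a2" using p1 p2 yy by simp
      qed
      then show ?thesis by (simp add: card_le_Suc0_iff_eq)
    qed
    have cB: "card B \<le> 1"
    proof -
      have "\<forall>a1\<in>B. \<forall>a2\<in>B. a1 = a2"
      proof (intro ballI)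
        fix a1 a2 assume a1: "a1 \<in> B" and a2: "a2 \<in> B"
        obtain y i where p1: "a1 = (y, i)" by (cases a1)
        obtain y' i' where p2: "a2 = (y', i')" by (cases a2)
        have yy: "y \<noteq> y0" "y' \<noteq> y0" using a1 a2 p1 p2 unfolding B_def by auto
        have g: "D y i > c" "D y' i' > c" using a1 a2 p1 p2 unfolding B_def S_def by auto
        have y: "y = y'" using iv[OF yy _ g] by blast
        have "i = i'"
        proof (rule ccontr)
          assume "i \<noteq> i'"
          moreover have g': "D y i > c" "D y i' > c" using g y by auto
          ultimately have "D y False > c \<and> D y True > c" by (cases i; cases i') auto
          then show False using i[OF yy(1)] by simp
        qed
        then show "a1 = a2" using p1 p2 y by simp
      qed
      then show ?thesis by (simp add: card_le_Suc0_iff_eq)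
    qed
    have "card S \<le> card A + card B" unfolding SAB by (rule card_Un_le)
    then show ?thesis using cA cB unfolding S_def by simp
  qed
qed

theorem theorem3p9:
  fixes R S T :: "'g::{ab_group_add, finite} set"
  assumes "uminus ` R = R" and "uminus ` S = S"
    and "0 \<notin> R \<union> S"
    and "CARD('g) \<ge> 2"
  shows "kth_largest_eigenvalue 3 (semi_cayley_adj_matrix R S T) / (2 * real CARD('g)) \<le> 1 / 3"
proof -
  obtain \<beta> :: "'g \<Rightarrow> 'g \<Rightarrow> complex" and d :: "'g \<Rightarrow> bool \<Rightarrow> real" where
    bij: "bij_betw \<beta> UNIV {f. is_char f}" and
    cp: "char_poly_mat (semi_cayley_adj_matrix R S T) = (\<Prod>u\<in>UNIV. [:- d (fst u) (snd u), 1:])" and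
    rel: "\<And>y. d y False + d y True = rr R (\<beta> y) + rr S (\<beta> y) \<and>
         d y False * d y True = rr R (\<beta> y) * rr S (\<beta> y) - (cmod (\<Sum>x\<in>T. \<beta> y x))\<^sup>2"
    using semi_cayley_charpoly[OF assms(1,2), of T] by blast
  define n where "n = real CARD('g)"
  define c where "c = 2 * n / 3"
  have n0: "n > 0" unfolding n_def by simp
  have chars: "is_char (\<beta> y)" for y using bij by (auto simp: bij_betw_def)
  have inj: "\<beta> y = \<beta> y' \<Longrightarrow> y = y'" for y y' using bij by (auto simp: bij_betw_def inj_on_def)
  obtain y0 where y0: "\<beta> y0 = (\<lambda>_. 1)"
  proof -
    have "(\<lambda>_. 1) \<in> \<beta> ` UNIV" using bij is_char_one by (auto simp: bij_betw_def)
    then show ?thesis using that by auto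
  qed
  have nt: "\<beta> y \<noteq> (\<lambda>_. 1)" if "y \<noteq> y0" for y using inj y0 that by metis
  have root: "(d y i - rr R (\<beta> y)) * (d y i - rr S (\<beta> y)) = (cmod (\<Sum>x\<in>T. \<beta> y x))\<^sup>2" for y i
    using eig_root[OF conjunct1[OF rel[of y]] conjunct2[OF rel[of y]]] by (cases i) auto
  have i: "\<not> (d y False > c \<and> d y True > c)" if "y \<noteq> y0" for y
  proof
    assume "d y False > c \<and> d y True > c"
    then show False using case_i[OF chars nt[OF that] conjunct1[OF rel[of y]] conjunct2[OF rel[of y]]]
      unfolding c_def n_def by blast
  qed
  have triv: "rr X (\<beta> y0) = real (card X)" "cmod (\<Sum>x\<in>X. \<beta> y0 x) = real (card X)" for X
    unfolding y0 rr_def by simp_all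
  have ii: "\<not> d y i > c" if "d y0 False > c" "d y0 True > c" "y \<noteq> y0" for y i
  proof
    assume "d y i > c"
    show False
      using case_ii[OF chars nt[OF that(3)], of "d y0 False" "d y0 True" R S T, OF _ _ _ _ root[of y i]]
        rel[of y0] that \<open>d y i > c\<close> unfolding triv c_def n_def by simp
  qed
  have iv: False if "y \<noteq> y0" "y' \<noteq> y0" "y \<noteq> y'" "d y i > c" "d y' i' > c" for y y' i i'
  proof (cases "\<exists>x. \<beta> y x ^ 2 \<noteq> 1")
    case True
    show False by (rule nonreal_noeig[OF chars True root[of y i]]) (use that in \<open>simp add: c_def n_def\<close>)
  next
    case False
    then have re1: "\<And>x. \<beta> y x ^ 2 = 1" by blast
    show False
    proof (cases "\<exists>x. \<beta> y' x ^ 2 \<noteq> 1")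
      case True
      show False by (rule nonreal_noeig[OF chars True root[of y' i']]) (use that in \<open>simp add: c_def n_def\<close>)
    next
      case False
      then have re2: "\<And>x. \<beta> y' x ^ 2 = 1" by blast
      have ne: "\<beta> y \<noteq> \<beta> y'" using inj that(3) by blast
      show False
        by (rule case_iv[OF chars chars re1 re2 nt[OF that(1)] nt[OF that(2)] ne root[of y i] _ root[of y' i']])
          (use that in \<open>simp_all add: c_def n_def\<close>)
    qed
  qed
  have cnt: "card {u. d (fst u) (snd u) > c} \<le> 2"
    by (rule count2[of y0]) (use i ii iv in blast)+
  have pr: "proots (char_poly_mat (semi_cayley_adj_matrix R S T)) = (\<Sum>u\<in>UNIV. {#d (fst u) (snd u)#})"
    unfolding cp by (subst proots_prod) auto
  have card3: "3 \<le> CARD('g \<times> bool)" using assms(4) by simp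
  have "kth_largest_eigenvalue 3 (semi_cayley_adj_matrix R S T) = rev (sorted_list_of_multiset (\<Sum>u\<in>UNIV. {#d (fst u) (snd u)#})) ! 2"
    unfolding kth_largest_eigenvalue_def eigenvalues_mset_def pr by simp
  also have "\<dots> \<le> c" by (rule kth3_le[OF card3 cnt])
  finally have "kth_largest_eigenvalue 3 (semi_cayley_adj_matrix R S T) \<le> 2 * n / 3" unfolding c_def .
  then show ?thesis using n0 unfolding n_def by (simp add: divide_le_eq field_simps)
qed

end
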